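(* Let $X$ be a nontrivial real Hausdorff locally convex space, let $g\in\Gamma(X)$ be sublinear, and let $x^{\ast}\in\partial g(0)$. Let $L_g:=\{x\in X: g(x)=\langle x,x^{\ast}\rangle,\ g(-x)=-\langle x,x^{\ast}\rangle\}$ (a closed linear subspace independent of the choice of $x^{\ast}\in\partial g(0)$), $\widehat{X}:=X/L_g$ with the quotient topology, and define $\widehat{g}_{x^{\ast}}:\widehat{X}\to\mathbb{R}\cup\{\pm\infty\}$ by $\widehat{g}_{x^{\ast}}(\widehat{x}):=g(x)-\langle x,x^{\ast}\rangle$ (this is well defined). Then $\widehat{g}_{x^{\ast}}$ is a proper lower semicontinuous sublinear function with $\widehat{g}_{x^{\ast}}\ge0$ and $L_{\widehat{g}_{x^{\ast}}}=\{\widehat{0}\}$. Moreover, $x^{\ast}\in\operatorname{qri}\partial g(0)$ if and only if $0\in\operatorname{qi}\partial\widehat{g}_{x^{\ast}}(\widehat{0})$.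
   Context: $X^{\ast}$ is the topological dual of $X$ with the weak$^{\ast}$ topology; similarly $(\widehat{X})^{\ast}$ carries its weak$^{\ast}$ topology, and closures in dual spaces are weak$^{\ast}$ closures. $\Gamma(X)$ is the set of proper lower semicontinuous convex functions. For a proper lsc sublinear $k$ on a locally convex space $V$: $\partial k(0)=\{v^{\ast}\in V^{\ast}: v^{\ast}\le k\}$ and $L_k:=\{v\in V: k(v)=\langle v,u^{\ast}\rangle,\ k(-v)=-\langle v,u^{\ast}\rangle\}$ for any $u^{\ast}\in\partial k(0)$ (independent of this choice). For convex $B\subset V^{\ast}$: $\operatorname{qri}B=\{b\in B:\overline{\mathbb{R}_+(B-b)}\text{ is a linear subspace}\}$ and $\operatorname{qi}B=\{b\in B:\overline{\mathbb{R}_+(B-b)}=V^{\ast}\}$. *)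

theory Defs
  imports "HOL-Analysis.Analysis"
begin

text \<open>A real vector space with a topology, presented on an explicit carrier set.
  This is needed because the quotient space X/L is built as a set of cosets.\<close>
record 'v tvs =
  vcarrier :: "'v set"
  vadd :: "'v \<Rightarrow> 'v \<Rightarrow> 'v"
  vscale :: "real \<Rightarrow> 'v \<Rightarrow> 'v"
  vzero :: "'v"
  vtop :: "'v topology"

definition vneg :: "('v, 'm) tvs_scheme \<Rightarrow> 'v \<Rightarrow> 'v" where
  "vneg V v = vscale V (-1) v"

definition vspace_axioms :: "('v, 'm) tvs_scheme \<Rightarrow> bool" where
  "vspace_axioms V \<longleftrightarrow>
     vzero V \<in> vcarrier V \<and>
     (\<forall>u\<in>vcarrier V. \<forall>v\<in>vcarrier V. vadd V u v \<in> vcarrier V) \<and>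
     (\<forall>c. \<forall>v\<in>vcarrier V. vscale V c v \<in> vcarrier V) \<and>
     (\<forall>u\<in>vcarrier V. \<forall>v\<in>vcarrier V. \<forall>w\<in>vcarrier V.
         vadd V (vadd V u v) w = vadd V u (vadd V v w)) \<and>
     (\<forall>u\<in>vcarrier V. \<forall>v\<in>vcarrier V. vadd V u v = vadd V v u) \<and>
     (\<forall>v\<in>vcarrier V. vadd V v (vzero V) = v) \<and>
     (\<forall>v\<in>vcarrier V. vadd V v (vneg V v) = vzero V) \<and>
     (\<forall>a. \<forall>u\<in>vcarrier V. \<forall>v\<in>vcarrier V.
         vscale V a (vadd V u v) = vadd V (vscale V a u) (vscale V a v)) \<and>
     (\<forall>a b. \<forall>v\<in>vcarrier V. vscale V (a + b) v = vadd V (vscale V a v) (vscale V b v)) \<and>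
     (\<forall>a b. \<forall>v\<in>vcarrier V. vscale V a (vscale V b v) = vscale V (a * b) v) \<and>
     (\<forall>v\<in>vcarrier V. vscale V 1 v = v)"

definition vconvex :: "('v, 'm) tvs_scheme \<Rightarrow> 'v set \<Rightarrow> bool" where
  "vconvex V W \<longleftrightarrow> (\<forall>u\<in>W. \<forall>v\<in>W. \<forall>t\<in>{0..1}.
      vadd V (vscale V t u) (vscale V (1 - t) v) \<in> W)"

definition is_hlcs :: "('v, 'm) tvs_scheme \<Rightarrow> bool" where
  "is_hlcs V \<longleftrightarrow>
     vspace_axioms V \<and>
     topspace (vtop V) = vcarrier V \<and>
     continuous_map (prod_topology (vtop V) (vtop V)) (vtop V) (\<lambda>(u, v). vadd V u v) \<and>
     continuous_map (prod_topology euclideanreal (vtop V)) (vtop V) (\<lambda>(c, v). vscale V c v) \<and>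
     Hausdorff_space (vtop V) \<and>
     (\<forall>U. openin (vtop V) U \<and> vzero V \<in> U \<longrightarrow>
        (\<exists>W. openin (vtop V) W \<and> vzero V \<in> W \<and> W \<subseteq> U \<and> vconvex V W))"

definition Xs :: "'a::real_vector topology \<Rightarrow> 'a tvs" where
  "Xs T = \<lparr>vcarrier = UNIV, vadd = (+), vscale = (*\<^sub>R), vzero = 0, vtop = T\<rparr>"

definition vproper :: "('v, 'm) tvs_scheme \<Rightarrow> ('v \<Rightarrow> ereal) \<Rightarrow> bool" where
  "vproper V k \<longleftrightarrow> (\<forall>v\<in>vcarrier V. k v \<noteq> -\<infinity>) \<and> (\<exists>v\<in>vcarrier V. k v \<noteq> \<infinity>)"

definition vlsc :: "('v, 'm) tvs_scheme \<Rightarrow> ('v \<Rightarrow> ereal) \<Rightarrow> bool" where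
  "vlsc V k \<longleftrightarrow> (\<forall>t::ereal. openin (vtop V) {v \<in> topspace (vtop V). t < k v})"

definition vconvex_fun :: "('v, 'm) tvs_scheme \<Rightarrow> ('v \<Rightarrow> ereal) \<Rightarrow> bool" where
  "vconvex_fun V k \<longleftrightarrow> (\<forall>u\<in>vcarrier V. \<forall>v\<in>vcarrier V. \<forall>t::real. 0 < t \<and> t < 1 \<longrightarrow>
      k (vadd V (vscale V t u) (vscale V (1 - t) v)) \<le> ereal t * k u + ereal (1 - t) * k v)"

definition Gamma :: "('v, 'm) tvs_scheme \<Rightarrow> ('v \<Rightarrow> ereal) \<Rightarrow> bool" where
  "Gamma V k \<longleftrightarrow> vproper V k \<and> vlsc V k \<and> vconvex_fun V k"

definition vsublinear :: "('v, 'm) tvs_scheme \<Rightarrow> ('v \<Rightarrow> ereal) \<Rightarrow> bool" where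
  "vsublinear V k \<longleftrightarrow>
     k (vzero V) = 0 \<and>
     (\<forall>t::real. \<forall>v\<in>vcarrier V. 0 < t \<longrightarrow> k (vscale V t v) = ereal t * k v) \<and>
     (\<forall>u\<in>vcarrier V. \<forall>v\<in>vcarrier V. k (vadd V u v) \<le> k u + k v)"

definition vlinear_fun :: "('v, 'm) tvs_scheme \<Rightarrow> ('v \<Rightarrow> real) \<Rightarrow> bool" where
  "vlinear_fun V f \<longleftrightarrow>
     (\<forall>u\<in>vcarrier V. \<forall>v\<in>vcarrier V. f (vadd V u v) = f u + f v) \<and>
     (\<forall>c. \<forall>v\<in>vcarrier V. f (vscale V c v) = c * f v)"

text \<open>Continuous linear functionals, represented extensionally (undefined off the carrier).\<close>
definition vdual :: "('v, 'm) tvs_scheme \<Rightarrow> ('v \<Rightarrow> real) set" where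
  "vdual V = {f. f \<in> extensional (vcarrier V) \<and> vlinear_fun V f \<and>
                 continuous_map (vtop V) euclideanreal f}"

definition wstar :: "('v, 'm) tvs_scheme \<Rightarrow> ('v \<Rightarrow> real) topology" where
  "wstar V = subtopology (product_topology (\<lambda>_. euclideanreal) (vcarrier V)) (vdual V)"

definition dzero :: "('v, 'm) tvs_scheme \<Rightarrow> 'v \<Rightarrow> real" where
  "dzero V = restrict (\<lambda>_. 0) (vcarrier V)"

definition dual_subspace :: "('v, 'm) tvs_scheme \<Rightarrow> ('v \<Rightarrow> real) set \<Rightarrow> bool" where
  "dual_subspace V M \<longleftrightarrow> M \<subseteq> vdual V \<and> dzero V \<in> M \<and>
     (\<forall>f\<in>M. \<forall>h\<in>M. restrict (\<lambda>v. f v + h v) (vcarrier V) \<in> M) \<and>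
     (\<forall>c. \<forall>f\<in>M. restrict (\<lambda>v. c * f v) (vcarrier V) \<in> M)"

definition cone_diff :: "('v, 'm) tvs_scheme \<Rightarrow> ('v \<Rightarrow> real) set \<Rightarrow> ('v \<Rightarrow> real) \<Rightarrow> ('v \<Rightarrow> real) set" where
  "cone_diff V B b = {restrict (\<lambda>v. t * (f v - b v)) (vcarrier V) | t f. 0 \<le> t \<and> f \<in> B}"

definition qri :: "('v, 'm) tvs_scheme \<Rightarrow> ('v \<Rightarrow> real) set \<Rightarrow> ('v \<Rightarrow> real) set" where
  "qri V B = {b \<in> B. dual_subspace V (wstar V closure_of cone_diff V B b)}"

definition qi :: "('v, 'm) tvs_scheme \<Rightarrow> ('v \<Rightarrow> real) set \<Rightarrow> ('v \<Rightarrow> real) set" where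
  "qi V B = {b \<in> B. wstar V closure_of cone_diff V B b = vdual V}"

definition subdiff0 :: "('v, 'm) tvs_scheme \<Rightarrow> ('v \<Rightarrow> ereal) \<Rightarrow> ('v \<Rightarrow> real) set" where
  "subdiff0 V k = {f \<in> vdual V. \<forall>v\<in>vcarrier V. ereal (f v) \<le> k v}"

text \<open>L_k, defined via some (any) element of \<partial>k(0).\<close>
definition Lsp :: "('v, 'm) tvs_scheme \<Rightarrow> ('v \<Rightarrow> ereal) \<Rightarrow> 'v set" where
  "Lsp V k = (let u = (SOME u. u \<in> subdiff0 V k) in
     {v \<in> vcarrier V. k v = ereal (u v) \<and> k (vneg V v) = ereal (- u v)})"

definition coset :: "'a::real_vector set \<Rightarrow> 'a \<Rightarrow> 'a set" where
  "coset L x = (\<lambda>l. x + l) ` L"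

definition quot_top :: "'a::real_vector topology \<Rightarrow> 'a set \<Rightarrow> 'a set topology" where
  "quot_top T L = topology (\<lambda>U. U \<subseteq> range (coset L) \<and>
                                 openin T {x \<in> topspace T. coset L x \<in> U})"

definition Xquot :: "'a::real_vector topology \<Rightarrow> 'a set \<Rightarrow> 'a set tvs" where
  "Xquot T L = \<lparr>vcarrier = range (coset L),
                vadd = (\<lambda>A B. {a + b | a b. a \<in> A \<and> b \<in> B}),
                vscale = (\<lambda>c A. {c *\<^sub>R a + l | a l. a \<in> A \<and> l \<in> L}),
                vzero = L,
                vtop = quot_top T L\<rparr>"

definition ghat :: "('a \<Rightarrow> ereal) \<Rightarrow> ('a \<Rightarrow> real) \<Rightarrow> 'a set \<Rightarrow> ereal" where
  "ghat g xs A = (let x = (SOME x. x \<in> A) in g x - ereal (xs x))"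

end

theory Submission
  imports Defs
begin

definition hb_good :: "('a::real_vector \<Rightarrow> real) \<Rightarrow> ('a \<times> real) set \<Rightarrow> bool" where
 "hb_good p G \<longleftrightarrow> (\<forall>x a b. (x,a)\<in>G \<longrightarrow> (x,b)\<in>G \<longrightarrow> a=b) \<and> (0,0)\<in>G \<and>
   (\<forall>x a y b. (x,a)\<in>G \<longrightarrow> (y,b)\<in>G \<longrightarrow> (x+y,a+b)\<in>G) \<and>
   (\<forall>x a s. (x,a)\<in>G \<longrightarrow> (s *\<^sub>R x, s * a)\<in>G) \<and> (\<forall>x a. (x,a) \<in> G \<longrightarrow> a \<le> p x)"

lemma hb_step:
  fixes p :: "'a::real_vector \<Rightarrow> real"
  assumes good: "hb_good p G" and sub: "\<And>x y. p (x+y) \<le> p x + p y"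
    and hom: "\<And>s x. s > 0 \<Longrightarrow> p (s *\<^sub>R x) = s * p x"
    and xn: "x \<notin> fst ` G"
  shows "\<exists>G'. hb_good p G' \<and> G \<subset> G'"
proof -
  have sv: "\<And>x a b. (x,a)\<in>G \<Longrightarrow> (x,b)\<in>G \<Longrightarrow> a=b" and z: "(0,0)\<in>G"
    and ad: "\<And>x a y b. (x,a)\<in>G \<Longrightarrow> (y,b)\<in>G \<Longrightarrow> (x+y,a+b)\<in>G"
    and sc: "\<And>x a s. (x,a)\<in>G \<Longrightarrow> (s *\<^sub>R x, s * a)\<in>G"
    and dom: "\<And>x a. (x,a) \<in> G \<Longrightarrow> a \<le> p x"
    using good unfolding hb_good_def by blast+
  have bnd: "a - p (m - x) \<le> p (m' + x) - a'" if "(m,a)\<in>G" "(m',a')\<in>G" for m a m' a'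
  proof -
    have "a + a' \<le> p (m + m')" using dom[OF ad[OF that]] .
    also have "m + m' = (m - x) + (m' + x)" by simp
    finally show ?thesis using sub[of "m - x" "m' + x"] by linarith
  qed
  define S where "S = {a - p (m - x) | m a. (m,a)\<in>G}"
  define c where "c = Sup S"
  have Sne: "S \<noteq> {}" using z unfolding S_def by blast
  have Sbd: "bdd_above S" unfolding S_def bdd_above_def using bnd[OF _ z] by auto
  have c_ge: "a - p (m - x) \<le> c" if "(m,a)\<in>G" for m a
    unfolding c_def by (rule cSup_upper[OF _ Sbd]) (use that S_def in blast)
  have c_le: "c \<le> p (m' + x) - a'" if "(m',a')\<in>G" for m' a'
    unfolding c_def by (rule cSup_least[OF Sne]) (use that bnd S_def in blast)
  define G' where "G' = {(m + s *\<^sub>R x, a + s * c) | m a s. (m,a)\<in>G}"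
  have uniq: "s = s' \<and> m = m'" if "(m,a)\<in>G" "(m',a')\<in>G" "m + s *\<^sub>R x = m' + s' *\<^sub>R x" for m a m' a' s s'
  proof (cases "s = s'")
    case True then show ?thesis using that by simp
  next
    case False
    have "(m + (-1) *\<^sub>R m', a + (-1) * a') \<in> G" using ad[OF that(1) sc[OF that(2)]] .
    then have "((1/(s'-s)) *\<^sub>R (m - m'), (1/(s'-s)) * (a - a')) \<in> G" using sc by fastforce
    moreover have "(1/(s'-s)) *\<^sub>R (m - m') = x"
    proof -
      have "m - m' = (s' - s) *\<^sub>R x" using that(3) by (simp add: algebra_simps)
      then show ?thesis using False by simp
    qed
    ultimately have "x \<in> fst ` G" by force
    then show ?thesis using xn by blast
  qed
  have "hb_good p G'"
    unfolding hb_good_def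
  proof (intro conjI allI impI)
    fix y b1 b2 assume "(y,b1)\<in>G'" "(y,b2)\<in>G'"
    then obtain m a s m' a' s' where "(m,a)\<in>G" "(m',a')\<in>G" "y = m + s *\<^sub>R x" "b1 = a + s * c"
      "y = m' + s' *\<^sub>R x" "b2 = a' + s' * c" unfolding G'_def by blast
    then show "b1 = b2" using uniq sv by metis
  next
    show "(0,0) \<in> G'" unfolding G'_def using z by force
  next
    fix y1 b1 y2 b2 assume "(y1,b1)\<in>G'" "(y2,b2)\<in>G'"
    then obtain m a s m' a' s' where "(m,a)\<in>G" "(m',a')\<in>G" "y1 = m + s *\<^sub>R x" "b1 = a + s * c"
      "y2 = m' + s' *\<^sub>R x" "b2 = a' + s' * c" unfolding G'_def by blast
    then have "(m+m', a+a') \<in> G" "y1+y2 = (m+m') + (s+s') *\<^sub>R x" "b1+b2 = (a+a') + (s+s') * c"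
      by (simp_all add: ad algebra_simps)
    then show "(y1+y2, b1+b2) \<in> G'" unfolding G'_def by blast
  next
    fix y b t assume "(y,b)\<in>G'"
    then obtain m a s where ma: "(m,a)\<in>G" and "y = m + s *\<^sub>R x" "b = a + s * c" unfolding G'_def by blast
    then have "(t *\<^sub>R m, t * a) \<in> G" "t *\<^sub>R y = t *\<^sub>R m + (t * s) *\<^sub>R x" "t * b = t * a + (t * s) * c"
      using sc[OF ma, of t] by (simp_all add: algebra_simps)
    then show "(t *\<^sub>R y, t * b) \<in> G'" unfolding G'_def by blast
  next
    fix y b assume "(y,b)\<in>G'"
    then obtain m a s where ma: "(m,a)\<in>G" and y: "y = m + s *\<^sub>R x" and b: "b = a + s * c" unfolding G'_def by blast
    show "b \<le> p y"
    proof (cases "s = 0")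
      case True then show ?thesis using dom[OF ma] y b by simp
    next
      case False
      show ?thesis
      proof (cases "s > 0")
        case True
        have "c \<le> p ((1/s) *\<^sub>R m + x) - (1/s) * a" using c_le[OF sc[OF ma, of "1/s"]] .
        then have "s * c \<le> s * (p ((1/s) *\<^sub>R m + x) - (1/s) * a)" using True
          by (intro mult_left_mono) auto
        also have "\<dots> = s * p ((1/s) *\<^sub>R m + x) - a" using True by (simp add: right_diff_distrib)
        finally have "s * c \<le> s * p ((1/s) *\<^sub>R m + x) - a" .
        moreover have "s *\<^sub>R ((1/s) *\<^sub>R m + x) = y" using True y by (simp add: algebra_simps)
        ultimately have "p y = s * p ((1/s) *\<^sub>R m + x)" using hom[OF True, of "(1/s) *\<^sub>R m + x"] by metis
        with \<open>s * c \<le> s * p ((1/s) *\<^sub>R m + x) - a\<close> b show ?thesis by linarith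
      next
        case neg: False
        define r where "r = -s"
        have r: "r > 0" using neg False r_def by simp
        have "(1/r) * a - p ((1/r) *\<^sub>R m - x) \<le> c" using c_ge[OF sc[OF ma, of "1/r"]] .
        then have "r * ((1/r) * a - p ((1/r) *\<^sub>R m - x)) \<le> r * c" using r
          by (intro mult_left_mono) auto
        moreover have "r * ((1/r) * a - p ((1/r) *\<^sub>R m - x)) = a - r * p ((1/r) *\<^sub>R m - x)"
          using r by (simp add: right_diff_distrib)
        ultimately have ineq: "a - r * p ((1/r) *\<^sub>R m - x) \<le> r * c" by linarith
        have "r *\<^sub>R ((1/r) *\<^sub>R m - x) = y" using r y r_def by (simp add: algebra_simps)
        then have "p y = r * p ((1/r) *\<^sub>R m - x)" using hom[OF r, of "(1/r) *\<^sub>R m - x"] by metis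
        moreover have "b = a - r * c" using b r_def by simp
        ultimately show ?thesis using ineq by linarith
      qed
    qed
  qed
  moreover have "G \<subseteq> G'" unfolding G'_def by (force intro: exI[of _ 0])
  moreover have "(x, c) \<in> G'" unfolding G'_def using z by (force intro: exI[of _ 1])
  moreover have "(x, c) \<notin> G" using xn by force
  ultimately show ?thesis by blast
qed

lemma hb_goodD:
  assumes "hb_good p G"
  shows "\<And>x a b. (x,a)\<in>G \<Longrightarrow> (x,b)\<in>G \<Longrightarrow> a=b" "(0,0)\<in>G"
    "\<And>x a y b. (x,a)\<in>G \<Longrightarrow> (y,b)\<in>G \<Longrightarrow> (x+y,a+b)\<in>G"
    "\<And>x a s. (x,a)\<in>G \<Longrightarrow> (s *\<^sub>R x, s * a)\<in>G" "\<And>x a. (x,a) \<in> G \<Longrightarrow> a \<le> p x"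
  using assms unfolding hb_good_def by blast+

lemma hb_goodI:
  assumes "\<And>x a b. (x,a)\<in>G \<Longrightarrow> (x,b)\<in>G \<Longrightarrow> a=b" "(0,0)\<in>G"
    "\<And>x a y b. (x,a)\<in>G \<Longrightarrow> (y,b)\<in>G \<Longrightarrow> (x+y,a+b)\<in>G"
    "\<And>x a s. (x,a)\<in>G \<Longrightarrow> (s *\<^sub>R x, s * a)\<in>G" "\<And>x a. (x,a) \<in> G \<Longrightarrow> a \<le> p x"
  shows "hb_good p G"
  using assms unfolding hb_good_def by blast

lemma hb_chain:
  assumes ne: "C \<noteq> {}" and gd: "\<And>X. X \<in> C \<Longrightarrow> hb_good p X"
    and ch: "\<And>X Y. X \<in> C \<Longrightarrow> Y \<in> C \<Longrightarrow> X \<subseteq> Y \<or> Y \<subseteq> X"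
  shows "hb_good p (\<Union>C)"
proof (rule hb_goodI)
  have two: "\<exists>X\<in>C. (x,a) \<in> X \<and> (y,b) \<in> X" if h: "(x,a) \<in> \<Union>C" "(y,b) \<in> \<Union>C" for x a y b
  proof -
    obtain X Y where "X \<in> C" "Y \<in> C" "(x,a) \<in> X" "(y,b) \<in> Y" using h by blast
    then show ?thesis using ch[of X Y] by blast
  qed
  fix x a b assume "(x,a) \<in> \<Union>C" "(x,b) \<in> \<Union>C"
  then obtain X where "X\<in>C" "(x,a)\<in>X" "(x,b)\<in>X" using two by blast
  then show "a = b" using hb_goodD(1)[OF gd] by blast
next
  obtain X where "X \<in> C" using ne by blast
  then show "(0,0) \<in> \<Union>C" using hb_goodD(2)[OF gd] by blast
next
  have two: "\<exists>X\<in>C. (x,a) \<in> X \<and> (y,b) \<in> X" if h: "(x,a) \<in> \<Union>C" "(y,b) \<in> \<Union>C" for x a y b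
  proof -
    obtain X Y where "X \<in> C" "Y \<in> C" "(x,a) \<in> X" "(y,b) \<in> Y" using h by blast
    then show ?thesis using ch[of X Y] by blast
  qed
  fix x a y b assume "(x,a) \<in> \<Union>C" "(y,b) \<in> \<Union>C"
  then obtain X where "X\<in>C" "(x,a)\<in>X" "(y,b)\<in>X" using two by blast
  then show "(x+y,a+b) \<in> \<Union>C" using hb_goodD(3)[OF gd] by blast
next
  fix x a s assume "(x,a) \<in> \<Union>C"
  then obtain X where "X\<in>C" "(x,a)\<in>X" by blast
  then show "(s *\<^sub>R x, s * a) \<in> \<Union>C" using hb_goodD(4)[OF gd] by blast
next
  fix x a assume "(x,a) \<in> \<Union>C"
  then obtain X where "X\<in>C" "(x,a)\<in>X" by blast
  then show "a \<le> p x" using hb_goodD(5)[OF gd] by blast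
qed

lemma hahn_banach:
  fixes p :: "'a::real_vector \<Rightarrow> real"
  assumes sub: "\<And>x y. p (x+y) \<le> p x + p y"
    and hom: "\<And>s x. s > 0 \<Longrightarrow> p (s *\<^sub>R x) = s * p x"
    and G0: "hb_good p G0"
  shows "\<exists>F. linear F \<and> (\<forall>x. F x \<le> p x) \<and> (\<forall>x a. (x,a) \<in> G0 \<longrightarrow> F x = a)"
proof -
  define A where "A = {G. hb_good p G \<and> G0 \<subseteq> G}"
  have "\<forall>C\<in>chains A. \<exists>U\<in>A. \<forall>X\<in>C. X \<subseteq> U"
  proof
    fix C assume C: "C \<in> chains A"
    show "\<exists>U\<in>A. \<forall>X\<in>C. X \<subseteq> U"
    proof (cases "C = {}")
      case True then show ?thesis using G0 A_def by auto
    next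
      case False
      have CA: "C \<subseteq> A" and ch: "\<And>X Y. X \<in> C \<Longrightarrow> Y \<in> C \<Longrightarrow> X \<subseteq> Y \<or> Y \<subseteq> X"
        using C unfolding chains_def chain_subset_def by auto
      have gd: "\<And>X. X \<in> C \<Longrightarrow> hb_good p X" using CA A_def by auto
      have "hb_good p (\<Union>C)" by (rule hb_chain[OF False gd ch])
      moreover obtain X where "X \<in> C" using False by blast
      then have "G0 \<subseteq> \<Union>C" using CA A_def by blast
      ultimately have "\<Union>C \<in> A" unfolding A_def by blast
      then show ?thesis by blast
    qed
  qed
  from Zorn_Lemma2[OF this] obtain M where MA: "M \<in> A" and max: "\<And>X. X\<in>A \<Longrightarrow> M \<subseteq> X \<Longrightarrow> X = M" by blast
  have gM: "hb_good p M" and G0M: "G0 \<subseteq> M" using MA A_def by auto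
  have full: "x \<in> fst ` M" for x
  proof (rule ccontr)
    assume "x \<notin> fst ` M"
    from hb_step[OF gM sub hom this] obtain G' where G': "hb_good p G'" "M \<subset> G'" by blast
    then have "G' \<in> A" using G0M A_def by blast
    then have "G' = M" using max G'(2) by blast
    then show False using G'(2) by blast
  qed
  note sv = hb_goodD(1)[OF gM] and ad = hb_goodD(3)[OF gM] and sc = hb_goodD(4)[OF gM] and dom = hb_goodD(5)[OF gM]
  define F where "F x = (THE a. (x,a) \<in> M)" for x
  have FM: "(x, F x) \<in> M" for x
  proof -
    obtain a where a: "(x,a) \<in> M" using full[of x] by force
    have "(THE b. (x,b) \<in> M) = a" by (rule the_equality) (use a sv[of x] in auto)
    then show ?thesis unfolding F_def using a by simp
  qed
  have Fe: "(x,a) \<in> M \<Longrightarrow> F x = a" for x a using FM sv by blast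
  have "linear F"
  proof (rule linearI)
    fix x y show "F (x + y) = F x + F y" using Fe ad FM by blast
  next
    fix c x show "F (c *\<^sub>R x) = c *\<^sub>R F x" using Fe[OF sc[OF FM]] by simp
  qed
  moreover have "\<forall>x. F x \<le> p x" using FM dom by blast
  moreover have "\<forall>x a. (x,a) \<in> G0 \<longrightarrow> F x = a" using Fe G0M by blast
  ultimately show ?thesis by blast
qed


lemma hlcs_basic:
  fixes T :: "'a::real_vector topology"
  assumes "is_hlcs (Xs T)"
  shows "topspace T = UNIV"
    and "continuous_map (prod_topology T T) T (\<lambda>(u, v). u + v)"
    and "continuous_map (prod_topology euclideanreal T) T (\<lambda>(c, v). c *\<^sub>R v)"
    and "\<And>U. openin T U \<Longrightarrow> 0 \<in> U \<Longrightarrow> \<exists>W. openin T W \<and> 0 \<in> W \<and> W \<subseteq> U \<and>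
            (\<forall>u\<in>W. \<forall>v\<in>W. \<forall>t\<in>{0..1}. t *\<^sub>R u + (1 - t) *\<^sub>R v \<in> W)"
  using assms unfolding is_hlcs_def Xs_def vconvex_def by auto

lemma hlcs_cont_trans:
  fixes T :: "'a::real_vector topology"
  assumes "is_hlcs (Xs T)"
  shows "continuous_map T T (\<lambda>x. x + a)"
proof -
  have "continuous_map T (prod_topology T T) (\<lambda>x. (x, a))"
    by (intro continuous_map_pairedI) (auto simp: hlcs_basic(1)[OF assms])
  from continuous_map_compose[OF this hlcs_basic(2)[OF assms]] show ?thesis by (simp add: o_def)
qed

lemma hlcs_cont_scale:
  fixes T :: "'a::real_vector topology"
  assumes "is_hlcs (Xs T)"
  shows "continuous_map T T (\<lambda>x. c *\<^sub>R x)"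
proof -
  have "continuous_map T (prod_topology euclideanreal T) (\<lambda>x. (c, x))"
    by (intro continuous_map_pairedI) auto
  from continuous_map_compose[OF this hlcs_basic(3)[OF assms]] show ?thesis by (simp add: o_def)
qed

lemma hlcs_cont_ray:
  fixes T :: "'a::real_vector topology"
  assumes "is_hlcs (Xs T)"
  shows "continuous_map euclideanreal T (\<lambda>s. s *\<^sub>R x)"
proof -
  have "continuous_map euclideanreal (prod_topology euclideanreal T) (\<lambda>s. (s, x))"
    by (intro continuous_map_pairedI) (auto simp: hlcs_basic(1)[OF assms])
  from continuous_map_compose[OF this hlcs_basic(3)[OF assms]] show ?thesis by (simp add: o_def)
qed

lemma hlcs_open_preimage:
  fixes T :: "'a::real_vector topology"
  assumes "is_hlcs (Xs T)" "continuous_map T T f" "openin T U"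
  shows "openin T {x. f x \<in> U}"
  using assms(2,3) unfolding continuous_map_def by (auto simp: hlcs_basic(1)[OF assms(1)])

lemma hlcs_absorb:
  fixes T :: "'a::real_vector topology"
  assumes X: "is_hlcs (Xs T)" and W: "openin T W" "0 \<in> W"
  shows "\<exists>t>0. \<exists>w\<in>W. x = t *\<^sub>R w"
proof -
  have "open {s::real. s *\<^sub>R x \<in> W}"
    using hlcs_cont_ray[OF X, of x] W unfolding continuous_map_def by auto
  moreover have "0 \<in> {s::real. s *\<^sub>R x \<in> W}" using W by simp
  ultimately obtain e where e: "e > 0" "ball 0 e \<subseteq> {s::real. s *\<^sub>R x \<in> W}"
    using open_contains_ball by blast
  have "e/2 \<in> ball 0 e" using e by simp
  then have "(e/2) *\<^sub>R x \<in> W" using e by blast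
  moreover have "x = (2/e) *\<^sub>R ((e/2) *\<^sub>R x)" using e by simp
  moreover have "2/e > 0" using e by simp
  ultimately show ?thesis by blast
qed


lemma sublinear_sep:
  fixes T :: "'a::real_vector topology" and k :: "'a \<Rightarrow> ereal"
  assumes X: "is_hlcs (Xs T)"
    and k0: "k 0 = 0" and kpos: "\<And>x. 0 \<le> k x"
    and khom: "\<And>t x. t > 0 \<Longrightarrow> k (t *\<^sub>R x) = ereal t * k x"
    and ksub: "\<And>x y. k (x + y) \<le> k x + k y"
    and klsc: "\<And>c::real. openin T {x. ereal c < k x}"
    and ky: "0 < k y"
  shows "\<exists>F. linear F \<and> continuous_map T euclideanreal F \<and> (\<forall>x. ereal (F x) \<le> k x) \<and> F y > 0"
proof -
  obtain c where c: "0 < ereal c" "ereal c < k y" using ereal_dense2[OF ky] by blast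
  have cpos: "c > 0" using c(1) by simp
  define V where "V = {w. w + y \<in> {x. ereal c < k x}}"
  have Vopen: "openin T V" unfolding V_def
    by (rule hlcs_open_preimage[OF X hlcs_cont_trans[OF X] klsc])
  have V0: "0 \<in> V" using c V_def by simp
  obtain W0 where W0: "openin T W0" "0 \<in> W0" "W0 \<subseteq> V"
    and W0c: "\<forall>u\<in>W0. \<forall>v\<in>W0. \<forall>t\<in>{0..1}. t *\<^sub>R u + (1 - t) *\<^sub>R v \<in> W0"
    using hlcs_basic(4)[OF X Vopen V0] by blast
  define W where "W = W0 \<inter> {w. (-1) *\<^sub>R w \<in> W0}"
  have Wopen: "openin T W" unfolding W_def
    by (intro openin_Int W0(1) hlcs_open_preimage[OF X hlcs_cont_scale[OF X]])
  have W0in: "0 \<in> W" using W0 W_def by simp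
  have WV: "W \<subseteq> V" using W0 W_def by blast
  have Wsym: "- w \<in> W" if "w \<in> W" for w using that W_def by simp
  have Wconv: "t *\<^sub>R u + (1 - t) *\<^sub>R v \<in> W" if "u \<in> W" "v \<in> W" "0 \<le> t" "t \<le> 1" for u v t
  proof -
    have "t *\<^sub>R u + (1 - t) *\<^sub>R v \<in> W0" using W0c that W_def by auto
    moreover have "(-1) *\<^sub>R (t *\<^sub>R u + (1 - t) *\<^sub>R v) = t *\<^sub>R ((-1) *\<^sub>R u) + (1 - t) *\<^sub>R ((-1) *\<^sub>R v)"
      by (simp add: algebra_simps)
    moreover have "(-1) *\<^sub>R u \<in> W0" "(-1) *\<^sub>R v \<in> W0" using that W_def by auto
    then have "t *\<^sub>R ((-1) *\<^sub>R u) + (1 - t) *\<^sub>R ((-1) *\<^sub>R v) \<in> W0" using W0c that(3,4) by (simp only: Ball_def atLeastAtMost_iff)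
    ultimately show ?thesis unfolding W_def by (simp only: Int_iff mem_Collect_eq)
  qed
  have Wstar: "t *\<^sub>R w \<in> W" if "w \<in> W" "0 \<le> t" "t \<le> 1" for w t
    using Wconv[OF that(1) W0in that(2,3)] by simp
  define S where "S x = {r. \<exists>z t w. t > 0 \<and> w \<in> W \<and> x - z = t *\<^sub>R w \<and> k z \<le> ereal (r - c * t)}" for x
  define p where "p x = Inf (S x)" for x
  have SD: "\<exists>z t w. t > 0 \<and> w \<in> W \<and> x - z = t *\<^sub>R w \<and> k z \<le> ereal (r - c * t)" if "r \<in> S x" for r x
    using that by (simp add: S_def)
  have SI: "r \<in> S x" if "t > 0" "w \<in> W" "x - z = t *\<^sub>R w" "k z \<le> ereal (r - c * t)" for r x z t w
    unfolding S_def using that by blast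
  have Sne: "S x \<noteq> {}" for x
  proof -
    obtain t w where "t > 0" "w \<in> W" "x = t *\<^sub>R w" using hlcs_absorb[OF X Wopen W0in] by blast
    moreover have "k 0 \<le> ereal (c * t - c * t)" using k0 by simp
    ultimately have "\<exists>z t' w'. t' > 0 \<and> w' \<in> W \<and> x - z = t' *\<^sub>R w' \<and> k z \<le> ereal (c * t - c * t')"
      by (intro exI[where x="0::'a"] exI[where x=t] exI[where x=w]) simp
    then have "c * t \<in> S x" unfolding S_def by simp
    then show ?thesis by blast
  qed
  have Slow: "0 \<le> r" if rS: "r \<in> S x" for r x
  proof -
    obtain z t w where tz: "t > 0" "k z \<le> ereal (r - c * t)" using SD[OF rS] by blast
    have "0 \<le> ereal (r - c * t)" using order_trans[OF kpos[of z] tz(2)] .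
    then have "ereal 0 \<le> ereal (r - c * t)" by (simp only: zero_ereal_def)
    then have "0 \<le> r - c * t" by simp
    moreover have "0 < c * t" using cpos tz(1) by simp
    ultimately show ?thesis by linarith
  qed
  have bdd: "bdd_below (S x)" for x unfolding bdd_below_def using Slow by blast
  have p_le: "p x \<le> r" if "r \<in> S x" for x r unfolding p_def by (rule cInf_lower[OF that bdd])
  have p_ge: "b \<le> p x" if "\<And>r. r \<in> S x \<Longrightarrow> b \<le> r" for x b unfolding p_def by (rule cInf_greatest[OF Sne that])
  have p_nonneg: "0 \<le> p x" for x by (rule p_ge) (rule Slow)
  have p2: "p w \<le> c" if "w \<in> W" for w
  proof -
    have "\<exists>z t w'. t > 0 \<and> w' \<in> W \<and> w - z = t *\<^sub>R w' \<and> k z \<le> ereal (c - c * t)"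
      using that k0 by (intro exI[where x="0::'a"] exI[where x="1::real"] exI[where x=w]) simp
    then have "c \<in> S w" unfolding S_def by simp
    then show ?thesis by (rule p_le)
  qed
  have p1: "ereal (p x) \<le> k x" for x
  proof (cases "k x")
    case (real a)
    have "p x \<le> a + e" if "e > 0" for e
    proof -
      have "\<exists>z t w'. t > 0 \<and> w' \<in> W \<and> x - z = t *\<^sub>R w' \<and> k z \<le> ereal (a + e - c * t)"
        using that cpos real W0in by (intro exI[where x="x"] exI[where x="e/c"] exI[where x="0::'a"]) simp
      then have "a + e \<in> S x" unfolding S_def by simp
      then show ?thesis by (rule p_le)
    qed
    then have "p x \<le> a" by (rule field_le_epsilon)
    then show ?thesis using real by simp
  next
    case PInf then show ?thesis by simp
  next
    case MInf then show ?thesis using kpos[of x] by simp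
  qed
  have Sadd: "r1 + r2 \<in> S (x1 + x2)" if rr: "r1 \<in> S x1" "r2 \<in> S x2" for r1 r2 x1 x2
  proof -
    obtain z1 t1 w1 where 1: "t1 > 0" "w1 \<in> W" "x1 - z1 = t1 *\<^sub>R w1" "k z1 \<le> ereal (r1 - c * t1)"
      using SD[OF rr(1)] by blast
    obtain z2 t2 w2 where 2: "t2 > 0" "w2 \<in> W" "x2 - z2 = t2 *\<^sub>R w2" "k z2 \<le> ereal (r2 - c * t2)"
      using SD[OF rr(2)] by blast
    define t where "t = t1 + t2"
    define w where "w = (t1/t) *\<^sub>R w1 + (1 - t1/t) *\<^sub>R w2"
    have tp: "t > 0" using 1 2 t_def by simp
    have "w \<in> W" unfolding w_def using 1 2 t_def by (intro Wconv) auto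
    moreover have "(x1 + x2) - (z1 + z2) = t *\<^sub>R w"
    proof -
      have "t *\<^sub>R w = (t * (t1/t)) *\<^sub>R w1 + (t * (1 - t1/t)) *\<^sub>R w2"
        unfolding w_def by (simp add: scaleR_add_right)
      also have "t * (t1/t) = t1" using tp by simp
      also have "t * (1 - t1/t) = t2" using tp t_def by (simp add: right_diff_distrib)
      finally show ?thesis using 1(3) 2(3) by (simp add: algebra_simps)
    qed
    moreover have "k (z1 + z2) \<le> ereal (r1 + r2 - c * t)"
    proof -
      have "k (z1 + z2) \<le> k z1 + k z2" by (rule ksub)
      also have "\<dots> \<le> ereal (r1 - c * t1) + ereal (r2 - c * t2)" using 1(4) 2(4) by (rule add_mono)
      also have "\<dots> = ereal (r1 + r2 - c * t)" by (simp add: t_def algebra_simps)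
      finally show ?thesis .
    qed
    ultimately show ?thesis using tp by (metis SI)
  qed
  have psub: "p (x1 + x2) \<le> p x1 + p x2" for x1 x2
  proof -
    have "p (x1 + x2) - p x2 \<le> r1" if r1: "r1 \<in> S x1" for r1
    proof -
      have "p (x1 + x2) - r1 \<le> r2" if "r2 \<in> S x2" for r2
        using p_le[OF Sadd[OF r1 that]] by linarith
      then have "p (x1 + x2) - r1 \<le> p x2" by (rule p_ge)
      then show ?thesis by linarith
    qed
    then have "p (x1 + x2) - p x2 \<le> p x1" by (rule p_ge)
    then show ?thesis by linarith
  qed
  have phom_le: "p (s *\<^sub>R x) \<le> s * p x" if s: "s > 0" for s x
  proof -
    have "p (s *\<^sub>R x) / s \<le> r" if r: "r \<in> S x" for r
    proof -
      obtain z t w where 1: "t > 0" "w \<in> W" "x - z = t *\<^sub>R w" "k z \<le> ereal (r - c * t)"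
        using SD[OF r] by blast
      have "s *\<^sub>R x - s *\<^sub>R z = (s * t) *\<^sub>R w" using 1(3) by (simp flip: scaleR_diff_right)
      moreover have "k (s *\<^sub>R z) \<le> ereal (s * r - c * (s * t))"
      proof -
        have "k (s *\<^sub>R z) = ereal s * k z" using khom[OF s] .
        also have "\<dots> \<le> ereal s * ereal (r - c * t)" using 1(4) s by (intro ereal_mult_left_mono) auto
        also have "\<dots> = ereal (s * r - c * (s * t))" by (simp add: algebra_simps)
        finally show ?thesis .
      qed
      moreover have "s * t > 0" using s 1 by simp
      ultimately have "s * r \<in> S (s *\<^sub>R x)" using 1(2) by (metis SI)
      then have "p (s *\<^sub>R x) \<le> s * r" by (rule p_le)
      then show ?thesis using s by (simp add: divide_le_eq mult.commute)
    qed
    then have "p (s *\<^sub>R x) / s \<le> p x" by (rule p_ge)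
    then show ?thesis using s by (simp add: divide_le_eq mult.commute)
  qed
  have phom: "p (s *\<^sub>R x) = s * p x" if s: "s > 0" for s x
  proof -
    have "p x = p ((1/s) *\<^sub>R (s *\<^sub>R x))" using s by simp
    also have "\<dots> \<le> (1/s) * p (s *\<^sub>R x)" using s by (intro phom_le) simp
    finally have "p x \<le> (1/s) * p (s *\<^sub>R x)" .
    then have "s * p x \<le> s * ((1/s) * p (s *\<^sub>R x))" using s by (intro mult_left_mono) auto
    then have "s * p x \<le> p (s *\<^sub>R x)" using s by simp
    then show ?thesis using phom_le[OF s, of x] by linarith
  qed
  have p3: "c \<le> p y"
  proof (rule p_ge)
    fix r assume "r \<in> S y"
    then obtain z t w where 1: "t > 0" "w \<in> W" "y - z = t *\<^sub>R w" "k z \<le> ereal (r - c * t)"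
      using SD by blast
    have ct: "0 < c * t" using cpos 1 by simp
    show "c \<le> r"
    proof (cases "t \<le> 1")
      case True
      have "- (t *\<^sub>R w) \<in> W" using Wstar[OF 1(2)] True 1(1) Wsym by simp
      then have "- (t *\<^sub>R w) + y \<in> {x. ereal c < k x}" using WV V_def by blast
      moreover have "- (t *\<^sub>R w) + y = z" using 1(3) by (simp add: algebra_simps)
      ultimately have "ereal c < k z" by simp
      then have "ereal c < ereal (r - c * t)" using 1(4) by (rule less_le_trans)
      then show ?thesis using ct by simp
    next
      case False
      have "0 \<le> ereal (r - c * t)" using kpos[of z] 1(4) by (rule order_trans)
      then have "c * 1 \<le> c * t" "0 \<le> r - c * t" using False cpos by auto
      then show ?thesis by linarith
    qed
  qed
  have yne: "y \<noteq> 0" using ky k0 by auto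
  define G0 where "G0 = {(s *\<^sub>R y, s * p y) | s. True}"
  have G0D: "\<exists>s. x = s *\<^sub>R y \<and> a = s * p y" if "(x,a) \<in> G0" for x a
    using that unfolding G0_def by blast
  have G0good: "hb_good p G0"
  proof (rule hb_goodI)
    fix x a b assume "(x,a) \<in> G0" "(x,b) \<in> G0"
    then obtain s s' where "x = s *\<^sub>R y" "a = s * p y" "x = s' *\<^sub>R y" "b = s' * p y" using G0D by metis
    then have "s = s'" using yne by (simp add: scaleR_cancel_right)
    then show "a = b" using \<open>a = s * p y\<close> \<open>b = s' * p y\<close> by simp
  next
    have "(0::'a, 0::real) = (0 *\<^sub>R y, 0 * p y)" by simp
    then show "(0,0) \<in> G0" unfolding G0_def by blast
  next
    fix x a x' b assume "(x,a) \<in> G0" "(x',b) \<in> G0"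
    then obtain s s' where "x = s *\<^sub>R y" "a = s * p y" "x' = s' *\<^sub>R y" "b = s' * p y" using G0D by metis
    then have "x + x' = (s + s') *\<^sub>R y" "a + b = (s + s') * p y" by (simp_all add: algebra_simps)
    then show "(x + x', a + b) \<in> G0" unfolding G0_def by blast
  next
    fix x a t assume "(x,a) \<in> G0"
    then obtain s where "x = s *\<^sub>R y" "a = s * p y" using G0D by metis
    then have "t *\<^sub>R x = (t * s) *\<^sub>R y" "t * a = (t * s) * p y" by simp_all
    then show "(t *\<^sub>R x, t * a) \<in> G0" unfolding G0_def by blast
  next
    fix x a assume "(x,a) \<in> G0"
    then obtain s where xa: "x = s *\<^sub>R y" "a = s * p y" using G0D by metis
    show "a \<le> p x"
    proof (cases "s > 0")
      case True then show ?thesis using phom xa by simp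
    next
      case False
      then have "s * p y \<le> 0" using p_nonneg[of y] by (simp add: mult_nonpos_nonneg)
      then show ?thesis using p_nonneg[of x] xa by linarith
    qed
  qed
  obtain F where F: "linear F" "\<And>x. F x \<le> p x" "\<And>x a. (x,a) \<in> G0 \<Longrightarrow> F x = a"
    using hahn_banach[OF psub phom G0good] by blast
  have "(y, p y) = (1 *\<^sub>R y, 1 * p y)" by simp
  then have "(y, p y) \<in> G0" unfolding G0_def by blast
  then have Fy: "F y = p y" using F(3) by blast
  have Fk: "ereal (F x) \<le> k x" for x using F(2)[of x] p1[of x] by (metis ereal_less_eq(3) order_trans)
  have Fbd: "\<bar>F w\<bar> \<le> c" if "w \<in> W" for w
  proof -
    have "F w \<le> c" using F(2)[of w] p2[OF that] by linarith
    moreover have "F (- w) \<le> c" using F(2)[of "-w"] p2[OF Wsym[OF that]] by linarith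
    ultimately show ?thesis using linear_neg[OF F(1), of w] by linarith
  qed
  have cont: "continuous_map T euclideanreal F"
    unfolding continuous_map_def
  proof (intro conjI allI impI)
    show "F \<in> topspace T \<rightarrow> topspace euclideanreal" by simp
  next
    fix U :: "real set" assume "openin euclideanreal U"
    then have Uo: "open U" by simp
    show "openin T {x \<in> topspace T. F x \<in> U}"
    proof (subst openin_subopen, intro ballI)
      fix x0 assume "x0 \<in> {x \<in> topspace T. F x \<in> U}"
      then have "F x0 \<in> U" by simp
      then obtain e where e: "e > 0" "ball (F x0) e \<subseteq> U" using Uo open_contains_ball by blast
      define N where "N = {x. (2 * c/e) *\<^sub>R (x + (- x0)) \<in> W}"
      have "continuous_map T T (\<lambda>x. (2 * c/e) *\<^sub>R (x + (- x0)))"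
        using continuous_map_compose[OF hlcs_cont_trans[OF X, of "-x0"] hlcs_cont_scale[OF X, of "2 * c/e"]]
        by (simp add: o_def)
      then have No: "openin T N" unfolding N_def by (rule hlcs_open_preimage[OF X _ Wopen])
      have Nx0: "x0 \<in> N" unfolding N_def using W0in by simp
      have "N \<subseteq> {x \<in> topspace T. F x \<in> U}"
      proof
        fix x assume "x \<in> N"
        then have "\<bar>F ((2 * c/e) *\<^sub>R (x + (- x0)))\<bar> \<le> c" using Fbd N_def by blast
        moreover have "F ((2 * c/e) *\<^sub>R (x + (- x0))) = (2 * c/e) * (F x - F x0)"
          using F(1) by (simp add: linear_cmul linear_diff diff_divide_distrib)
        ultimately have "(2 * c/e) * \<bar>F x - F x0\<bar> \<le> c" using cpos e by (simp add: abs_mult)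
        then have A: "(2 * c/e) * \<bar>F x - F x0\<bar> \<le> c" .
        have "\<bar>F x - F x0\<bar> = (e/(2 * c)) * ((2 * c/e) * \<bar>F x - F x0\<bar>)" using cpos e by simp
        also have "\<dots> \<le> (e/(2 * c)) * c" using A cpos e by (intro mult_left_mono) auto
        also have "\<dots> = e/2" using cpos by simp
        finally have "\<bar>F x - F x0\<bar> \<le> e/2" .
        then have "F x \<in> ball (F x0) e" using e by (simp add: dist_real_def abs_minus_commute)
        then show "x \<in> {x \<in> topspace T. F x \<in> U}" using e hlcs_basic(1)[OF X] by auto
      qed
      then show "\<exists>T'. openin T T' \<and> x0 \<in> T' \<and> T' \<subseteq> {x \<in> topspace T. F x \<in> U}"
        using No Nx0 by blast
    qed
  qed
  show ?thesis using F(1) cont Fk Fy p3 cpos by auto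
qed


lemma fin_sep:
  fixes F :: "'a set"
  assumes "finite F"
  shows "\<And>(K :: ('a \<Rightarrow> real) set) (\<phi> :: 'a \<Rightarrow> real). (\<lambda>_. 0) \<in> K \<Longrightarrow> (\<And>f g. f\<in>K \<Longrightarrow> g\<in>K \<Longrightarrow> (\<lambda>i. f i + g i) \<in> K) \<Longrightarrow>
     (\<And>c f. f\<in>K \<Longrightarrow> (\<lambda>i. c * f i) \<in> K) \<Longrightarrow> (\<forall>f\<in>K. \<exists>i\<in>F. f i \<noteq> \<phi> i) \<Longrightarrow>
     \<exists>a. (\<forall>f\<in>K. (\<Sum>i\<in>F. a i * f i) = 0) \<and> (\<Sum>i\<in>F. a i * \<phi> i) \<noteq> 0"
  using assms
proof (induction F rule: finite_induct)
  case empty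
  from empty.prems(4) empty.prems(1) have False by blast
  then show ?case ..
next
  case (insert j F K \<phi>)
  note K0 = insert.prems(1) and Kadd = insert.prems(2) and Ksc = insert.prems(3) and nag = insert.prems(4)
  have sumins: "(\<Sum>i\<in>insert j F. (a(j := v)) i * f i) = v * f j + (\<Sum>i\<in>F. a i * f i)" for a v and f :: "'a \<Rightarrow> real"
  proof -
    have "(\<Sum>i\<in>insert j F. (a(j := v)) i * f i) = v * f j + (\<Sum>i\<in>F. (a(j := v)) i * f i)"
      using insert.hyps by simp
    also have "(\<Sum>i\<in>F. (a(j := v)) i * f i) = (\<Sum>i\<in>F. a i * f i)"
      using insert.hyps by (intro sum.cong) auto
    finally show ?thesis .
  qed
  show ?case
  proof (cases "\<exists>k0\<in>K. k0 j \<noteq> 0")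
    case True
    then obtain k0 where k0: "k0 \<in> K" "k0 j \<noteq> 0" by blast
    define k1 where "k1 = (\<lambda>i. (1 / k0 j) * k0 i)"
    have k1K: "k1 \<in> K" unfolding k1_def using Ksc[OF k0(1)] .
    have k1j: "k1 j = 1" using k0 k1_def by simp
    define P where "P f = (\<lambda>i. f i - f j * k1 i)" for f :: "'a \<Rightarrow> real"
    define K' where "K' = P ` K"
    have K'0: "(\<lambda>_. 0) \<in> K'"
    proof -
      have "P (\<lambda>_. 0) = (\<lambda>_. 0)" unfolding P_def by simp
      then show ?thesis using K0 K'_def by (metis image_eqI)
    qed
    have K'add: "(\<lambda>i. f i + g i) \<in> K'" if fg: "f \<in> K'" "g \<in> K'" for f g
    proof -
      obtain f0 g0 where "f0 \<in> K" "g0 \<in> K" "f = P f0" "g = P g0" using fg K'_def by blast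
      moreover have "P (\<lambda>i. f0 i + g0 i) = (\<lambda>i. P f0 i + P g0 i)" unfolding P_def by (simp add: algebra_simps)
      ultimately show ?thesis using Kadd K'_def by (metis image_eqI)
    qed
    have K'sc: "(\<lambda>i. c * f i) \<in> K'" if fK: "f \<in> K'" for c f
    proof -
      obtain f0 where "f0 \<in> K" "f = P f0" using fK K'_def by blast
      moreover have "P (\<lambda>i. c * f0 i) = (\<lambda>i. c * P f0 i)" unfolding P_def by (simp add: algebra_simps)
      ultimately show ?thesis using Ksc K'_def by (metis image_eqI)
    qed
    have nag': "\<forall>f\<in>K'. \<exists>i\<in>F. f i \<noteq> P \<phi> i"
    proof
      fix f assume "f \<in> K'"
      then obtain f0 where f0: "f0 \<in> K" "f = P f0" using K'_def by blast
      show "\<exists>i\<in>F. f i \<noteq> P \<phi> i"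
      proof (rule ccontr)
        assume "\<not> ?thesis"
        then have eq: "\<And>i. i \<in> F \<Longrightarrow> f0 i - f0 j * k1 i = \<phi> i - \<phi> j * k1 i" using f0 P_def by auto
        define g where "g = (\<lambda>i. f0 i + (\<phi> j - f0 j) * k1 i)"
        have "g \<in> K" unfolding g_def using Kadd[OF f0(1) Ksc[OF k1K]] .
        moreover have "g i = \<phi> i" if "i \<in> insert j F" for i
        proof (cases "i = j")
          case True then show ?thesis using k1j g_def by simp
        next
          case False then have "i \<in> F" using that by simp
          then show ?thesis using eq[of i] g_def by (simp add: algebra_simps)
        qed
        ultimately show False using nag by blast
      qed
    qed
    obtain a where a: "\<forall>f\<in>K'. (\<Sum>i\<in>F. a i * f i) = 0" "(\<Sum>i\<in>F. a i * P \<phi> i) \<noteq> 0"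
      using insert.IH[OF K'0 K'add K'sc nag'] by blast
    define v where "v = - (\<Sum>i\<in>F. a i * k1 i)"
    have key: "(\<Sum>i\<in>insert j F. (a(j := v)) i * f i) = (\<Sum>i\<in>F. a i * P f i)" for f
    proof -
      have "(\<Sum>i\<in>F. a i * P f i) = (\<Sum>i\<in>F. a i * f i - f j * (a i * k1 i))"
        unfolding P_def by (intro sum.cong) (auto simp: algebra_simps)
      also have "\<dots> = (\<Sum>i\<in>F. a i * f i) - f j * (\<Sum>i\<in>F. a i * k1 i)"
        by (simp add: sum_subtractf sum_distrib_left)
      finally show ?thesis unfolding sumins v_def by simp
    qed
    show ?thesis
    proof (intro exI[of _ "a(j := v)"] conjI ballI)
      fix f assume "f \<in> K"
      then have "P f \<in> K'" using K'_def by blast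
      then show "(\<Sum>i\<in>insert j F. (a(j := v)) i * f i) = 0" using key a(1) by simp
    next
      show "(\<Sum>i\<in>insert j F. (a(j := v)) i * \<phi> i) \<noteq> 0" using key a(2) by simp
    qed
  next
    case False
    then have Kj: "\<And>f. f \<in> K \<Longrightarrow> f j = 0" by blast
    show ?thesis
    proof (cases "\<exists>f\<in>K. \<forall>i\<in>F. f i = \<phi> i")
      case True
      then obtain f where f: "f \<in> K" "\<forall>i\<in>F. f i = \<phi> i" by blast
      have "\<phi> j \<noteq> 0"
      proof
        assume "\<phi> j = 0"
        then have "\<forall>i\<in>insert j F. f i = \<phi> i" using f Kj by auto
        then show False using nag f(1) by blast
      qed
      show ?thesis
      proof (intro exI[of _ "(\<lambda>_. 0)(j := 1)"] conjI ballI)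
        fix h assume "h \<in> K"
        then show "(\<Sum>i\<in>insert j F. ((\<lambda>_. 0)(j := 1)) i * h i) = 0" unfolding sumins using Kj by simp
      next
        show "(\<Sum>i\<in>insert j F. ((\<lambda>_. 0)(j := 1)) i * \<phi> i) \<noteq> 0" unfolding sumins using \<open>\<phi> j \<noteq> 0\<close> by simp
      qed
    next
      case False
      then have nagF: "\<forall>f\<in>K. \<exists>i\<in>F. f i \<noteq> \<phi> i" by blast
      obtain a where a: "\<forall>f\<in>K. (\<Sum>i\<in>F. a i * f i) = 0" "(\<Sum>i\<in>F. a i * \<phi> i) \<noteq> 0"
        using insert.IH[OF K0 Kadd Ksc nagF] by blast
      show ?thesis
      proof (intro exI[of _ "a(j := 0)"] conjI ballI)
        fix h assume "h \<in> K"
        then show "(\<Sum>i\<in>insert j F. (a(j := 0)) i * h i) = 0" unfolding sumins using a(1) by simp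
      next
        show "(\<Sum>i\<in>insert j F. (a(j := 0)) i * \<phi> i) \<noteq> 0" unfolding sumins using a(2) by simp
      qed
    qed
  qed
qed

lemma vdual_Xs: "f \<in> vdual (Xs T) \<longleftrightarrow> linear f \<and> continuous_map T euclideanreal f"
proof -
  have "vlinear_fun (Xs T) f \<longleftrightarrow> linear f"
    unfolding vlinear_fun_def Xs_def by (auto intro: linearI simp: linear_add linear_cmul)
  then show ?thesis unfolding vdual_def Xs_def by simp
qed

lemma wstar_sep:
  fixes T :: "'a::real_vector topology"
  assumes Kc: "closedin (wstar (Xs T)) K" and Ks: "dual_subspace (Xs T) K"
    and phi: "\<phi> \<in> vdual (Xs T)" "\<phi> \<notin> K"
  shows "\<exists>x. (\<forall>\<psi>\<in>K. \<psi> x = 0) \<and> \<phi> x \<noteq> 0"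
proof -
  let ?P = "product_topology (\<lambda>_::'a. euclideanreal) UNIV"
  have tsW: "topspace (wstar (Xs T)) = vdual (Xs T)"
    unfolding wstar_def Xs_def by (simp add: topspace_product_topology vdual_def)
  have KV: "K \<subseteq> vdual (Xs T)" using Ks unfolding dual_subspace_def by (elim conjE)
  have "openin (wstar (Xs T)) (vdual (Xs T) - K)" using Kc tsW by (simp add: closedin_def)
  then have "\<exists>U. openin ?P U \<and> vdual (Xs T) - K = U \<inter> vdual (Xs T)"
    unfolding wstar_def openin_subtopology by (simp add: Xs_def)
  then obtain U where U: "openin ?P U" "vdual (Xs T) - K = U \<inter> vdual (Xs T)" by blast
  have "\<phi> \<in> U" using U phi by blast
  moreover have "\<forall>x\<in>U. \<exists>Uf. finite {i \<in> UNIV. Uf i \<noteq> topspace euclideanreal} \<and>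
       (\<forall>i\<in>UNIV. openin euclideanreal (Uf i)) \<and> x \<in> Pi\<^sub>E UNIV Uf \<and> Pi\<^sub>E UNIV Uf \<subseteq> U"
    using U(1) by (simp only: openin_product_topology_alt)
  ultimately have "\<exists>Uf. finite {i \<in> UNIV. Uf i \<noteq> topspace euclideanreal} \<and>
       (\<forall>i\<in>UNIV. openin euclideanreal (Uf i)) \<and> \<phi> \<in> Pi\<^sub>E UNIV Uf \<and> Pi\<^sub>E UNIV Uf \<subseteq> U"
    by (rule bspec[rotated])
  then obtain Uf where Uf: "finite {i \<in> UNIV. Uf i \<noteq> topspace euclideanreal}" "\<phi> \<in> Pi\<^sub>E UNIV Uf" "Pi\<^sub>E UNIV Uf \<subseteq> U"
    by (elim exE conjE) (intro that)
  define F where "F = {i. Uf i \<noteq> UNIV}"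
  have Ff: "finite F" using Uf(1) F_def by simp
  have nag: "\<forall>\<psi>\<in>K. \<exists>i\<in>F. \<psi> i \<noteq> \<phi> i"
  proof (rule ballI, rule ccontr)
    fix \<psi> assume \<psi>: "\<psi> \<in> K" and "\<not> (\<exists>i\<in>F. \<psi> i \<noteq> \<phi> i)"
    then have eq: "\<And>i. i \<in> F \<Longrightarrow> \<psi> i = \<phi> i" by blast
    have "\<psi> \<in> Pi\<^sub>E UNIV Uf"
    proof -
      have "\<psi> i \<in> Uf i" for i
      proof (cases "i \<in> F")
        case True then show ?thesis using eq Uf(2) by (auto simp: PiE_def Pi_def)
      next
        case False then show ?thesis using F_def by auto
      qed
      then show ?thesis by (auto simp: PiE_def)
    qed
    then have "\<psi> \<in> U" using Uf(3) by blast
    then show False using \<psi> KV U(2) by blast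
  qed
  have Ks': "dzero (Xs T) \<in> K" "\<And>f h. f\<in>K \<Longrightarrow> h\<in>K \<Longrightarrow> restrict (\<lambda>v. f v + h v) (vcarrier (Xs T)) \<in> K"
     "\<And>c f. f\<in>K \<Longrightarrow> restrict (\<lambda>v. c * f v) (vcarrier (Xs T)) \<in> K"
    using Ks unfolding dual_subspace_def by blast+
  have K0: "(\<lambda>_. 0) \<in> K" using Ks'(1) unfolding dzero_def Xs_def by (simp add: restrict_UNIV)
  have Kadd: "(\<lambda>i. f i + g i) \<in> K" if "f \<in> K" "g \<in> K" for f g
    using Ks'(2)[OF that] unfolding Xs_def by (simp add: restrict_UNIV)
  have Ksc: "(\<lambda>i. c * f i) \<in> K" if "f \<in> K" for c f
    using Ks'(3)[OF that] unfolding Xs_def by (simp add: restrict_UNIV)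
  obtain a where a: "\<forall>f\<in>K. (\<Sum>i\<in>F. a i * f i) = 0" "(\<Sum>i\<in>F. a i * \<phi> i) \<noteq> 0"
    using fin_sep[OF Ff K0 Kadd Ksc nag] by blast
  define x where "x = (\<Sum>i\<in>F. a i *\<^sub>R i)"
  have ev: "f x = (\<Sum>i\<in>F. a i * f i)" if "f \<in> vdual (Xs T)" for f
  proof -
    have "linear f" using that vdual_Xs by blast
    then show ?thesis unfolding x_def by (simp add: linear_sum linear_cmul)
  qed
  have "\<forall>\<psi>\<in>K. \<psi> x = 0"
  proof
    fix \<psi> assume "\<psi> \<in> K"
    then have "\<psi> \<in> vdual (Xs T)" using KV by blast
    then have "\<psi> x = (\<Sum>i\<in>F. a i * \<psi> i)" by (rule ev)
    then show "\<psi> x = 0" using a(1) \<open>\<psi> \<in> K\<close> by simp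
  qed
  moreover have "\<phi> x \<noteq> 0" using ev[OF phi(1)] a(2) by simp
  ultimately show ?thesis by blast
qed


locale P9 =
  fixes T :: "'a::real_vector topology" and g :: "'a \<Rightarrow> ereal" and xs :: "'a \<Rightarrow> real" and L :: "'a set"
  assumes X: "is_hlcs (Xs T)"
    and gGamma: "Gamma (Xs T) g"
    and gsubl: "vsublinear (Xs T) g"
    and xsB: "xs \<in> subdiff0 (Xs T) g"
    and L_def: "L = {x. g x = ereal (xs x) \<and> g (- x) = ereal (- xs x)}"
begin

lemma top: "topspace T = UNIV" using hlcs_basic(1)[OF X] .

lemma g_nm: "g x \<noteq> -\<infinity>" using gGamma unfolding Gamma_def vproper_def Xs_def by simp
lemma g0: "g 0 = 0" using gsubl unfolding vsublinear_def Xs_def by simp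
lemma ghom: "t > 0 \<Longrightarrow> g (t *\<^sub>R x) = ereal t * g x" using gsubl unfolding vsublinear_def Xs_def by simp
lemma gadd: "g (x + y) \<le> g x + g y" using gsubl unfolding vsublinear_def Xs_def by simp
lemma glsc: "openin T {x. t < g x}"
proof -
  have "openin T {v \<in> topspace T. t < g v}" using gGamma unfolding Gamma_def vlsc_def Xs_def by simp
  then show ?thesis using top by simp
qed
lemma xs_lin: "linear xs" and xs_cont: "continuous_map T euclideanreal xs"
  using xsB vdual_Xs unfolding subdiff0_def by auto
lemma xs_le: "ereal (xs x) \<le> g x" using xsB unfolding subdiff0_def Xs_def by simp

definition k where "k x = g x - ereal (xs x)"

lemma k_nonneg: "0 \<le> k x"
  using xs_le[of x] g_nm[of x] unfolding k_def by (cases "g x") auto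

lemma k0: "k 0 = 0" unfolding k_def using g0 linear_0[OF xs_lin] by simp

lemma khom: "t > 0 \<Longrightarrow> k (t *\<^sub>R x) = ereal t * k x"
  unfolding k_def using ghom[of t x] linear_cmul[OF xs_lin, of t x] g_nm[of x]
  by (cases "g x") (auto simp: right_diff_distrib)

lemma ksub: "k (x + y) \<le> k x + k y"
proof -
  have le: "g (x + y) \<le> g x + g y" by (rule gadd)
  have xa: "xs (x + y) = xs x + xs y" using linear_add[OF xs_lin] .
  show ?thesis unfolding k_def xa using le g_nm[of x] g_nm[of y] g_nm[of "x+y"]
    by (cases "g x"; cases "g y"; cases "g (x+y)") auto
qed

lemma kzero: "k x = 0 \<longleftrightarrow> g x = ereal (xs x)"
  unfolding k_def using g_nm[of x] by (cases "g x") auto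

lemma kneg_zero: "k (- x) = 0 \<longleftrightarrow> g (- x) = ereal (- xs x)"
  using kzero[of "-x"] linear_neg[OF xs_lin, of x] by simp

lemma L_iff: "x \<in> L \<longleftrightarrow> k x = 0 \<and> k (- x) = 0"
  unfolding L_def kneg_zero kzero by (simp add: linear_neg[OF xs_lin])

lemma k_le0: "k x \<le> 0 \<Longrightarrow> k x = 0" using k_nonneg[of x] by simp

lemma L0: "0 \<in> L" unfolding L_iff using k0 by simp

lemma L_add: "x \<in> L \<Longrightarrow> y \<in> L \<Longrightarrow> x + y \<in> L"
proof -
  assume "x \<in> L" "y \<in> L"
  then have z: "k x = 0" "k (-x) = 0" "k y = 0" "k (-y) = 0" using L_iff by auto
  have "k (x + y) \<le> 0" using ksub[of x y] z by simp
  moreover have "k (- (x + y)) \<le> 0" using ksub[of "-x" "-y"] z by simp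
  ultimately show "x + y \<in> L" using L_iff k_le0 by blast
qed

lemma L_scale: "x \<in> L \<Longrightarrow> c *\<^sub>R x \<in> L"
proof -
  assume "x \<in> L"
  then have z: "k x = 0" "k (-x) = 0" using L_iff by auto
  consider "c > 0" | "c = 0" | "c < 0" by linarith
  then show "c *\<^sub>R x \<in> L"
  proof cases
    case 1
    have "k (c *\<^sub>R x) = 0" using khom[OF 1, of x] z by simp
    moreover have "k (- (c *\<^sub>R x)) = 0" using khom[OF 1, of "-x"] z by simp
    ultimately show ?thesis using L_iff by blast
  next
    case 2 then show ?thesis using L0 by simp
  next
    case 3
    then have c': "-c > 0" by simp
    have "k (c *\<^sub>R x) = 0" using khom[OF c', of "-x"] z by simp
    moreover have "k (- (c *\<^sub>R x)) = 0" using khom[OF c', of x] z by simp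
    ultimately show ?thesis using L_iff by blast
  qed
qed

lemma L_neg: "x \<in> L \<Longrightarrow> - x \<in> L" using L_scale[of x "-1"] by simp
lemma L_diff: "x \<in> L \<Longrightarrow> y \<in> L \<Longrightarrow> x - y \<in> L" using L_add[of x "-y"] L_neg[of y] by simp

lemma kL: "l \<in> L \<Longrightarrow> k (x + l) = k x"
proof -
  assume l: "l \<in> L"
  then have z: "k l = 0" "k (-l) = 0" using L_iff by auto
  have "k (x + l) \<le> k x" using ksub[of x l] z by simp
  moreover have "k x \<le> k (x + l)" using ksub[of "x + l" "-l"] z by simp
  ultimately show ?thesis by simp
qed

lemma subdiff_L: "f \<in> subdiff0 (Xs T) g \<Longrightarrow> l \<in> L \<Longrightarrow> f l = xs l"
proof -
  assume f: "f \<in> subdiff0 (Xs T) g" and l: "l \<in> L"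
  have lin: "linear f" using f vdual_Xs unfolding subdiff0_def by blast
  have le: "\<And>x. ereal (f x) \<le> g x" using f unfolding subdiff0_def Xs_def by simp
  have "g l = ereal (xs l)" "g (-l) = ereal (- xs l)" using l L_def by auto
  then have "f l \<le> xs l" "f (-l) \<le> - xs l" using le[of l] le[of "-l"] by auto
  then show ?thesis using linear_neg[OF lin, of l] by linarith
qed

lemma klsc_real: "openin T {x. ereal c < k x}"
proof (subst openin_subopen, intro ballI)
  fix x0 assume "x0 \<in> {x. ereal c < k x}"
  then have "ereal c < k x0" by simp
  then have "ereal (c + xs x0) < g x0" unfolding k_def using g_nm[of x0] by (cases "g x0") auto
  then obtain d where d: "ereal (c + xs x0) < ereal d" "ereal d < g x0" using ereal_dense2 by blast
  define e where "e = d - c - xs x0"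
  have e: "e > 0" using d(1) e_def by simp
  define N where "N = {x. ereal d < g x} \<inter> {x. xs x \<in> ball (xs x0) e}"
  have "\<forall>U. open U \<longrightarrow> openin T {x. xs x \<in> U}"
    using xs_cont top unfolding continuous_map_def by simp
  from this[rule_format, OF open_ball] have "openin T {x. xs x \<in> ball (xs x0) e}" .
  then have No: "openin T N" unfolding N_def using glsc by (intro openin_Int) auto
  have Nx: "x0 \<in> N" unfolding N_def using d e by simp
  have "N \<subseteq> {x. ereal c < k x}"
  proof
    fix x assume "x \<in> N"
    then have gx: "ereal d < g x" and "dist (xs x0) (xs x) < e" unfolding N_def by auto
    then have "xs x < d - c" unfolding e_def dist_real_def by auto
    then show "x \<in> {x. ereal c < k x}" unfolding k_def using gx by (cases "g x") auto
  qed
  then show "\<exists>T'. openin T T' \<and> x0 \<in> T' \<and> T' \<subseteq> {x. ereal c < k x}" using No Nx by blast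
qed

lemma klsc: "openin T {x. t < k x}"
proof (cases t)
  case (real c) then show ?thesis using klsc_real by simp
next
  case PInf then show ?thesis by simp
next
  case MInf
  have "{x. t < k x} = topspace T" using MInf top k_nonneg by (auto simp: less_le_trans[of "-\<infinity>" 0])
  then show ?thesis by simp
qed

end


context P9 begin

abbreviation Q where "Q \<equiv> Xquot T L"

lemma mem_coset: "y \<in> coset L x \<longleftrightarrow> y - x \<in> L"
proof
  assume "y \<in> coset L x"
  then obtain l where "l \<in> L" "y = x + l" unfolding coset_def by blast
  then show "y - x \<in> L" by simp
next
  assume "y - x \<in> L"
  moreover have "y = x + (y - x)" by simp
  ultimately show "y \<in> coset L x" unfolding coset_def by blast
qed

lemma coset_self: "x \<in> coset L x" using mem_coset L0 by simp

lemma coset_eq: "coset L x = coset L y \<longleftrightarrow> x - y \<in> L"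
proof
  assume "coset L x = coset L y"
  then show "x - y \<in> L" using coset_self[of x] mem_coset by blast
next
  assume d: "x - y \<in> L"
  show "coset L x = coset L y"
  proof (rule set_eqI)
    fix z
    show "z \<in> coset L x \<longleftrightarrow> z \<in> coset L y" unfolding mem_coset
    proof
      assume "z - x \<in> L"
      then have "(z - x) + (x - y) \<in> L" using d by (rule L_add)
      then show "z - y \<in> L" by simp
    next
      assume "z - y \<in> L"
      then have "(z - y) - (x - y) \<in> L" using d by (rule L_diff)
      then show "z - x \<in> L" by simp
    qed
  qed
qed

lemma coset0: "coset L 0 = L" using mem_coset[of _ 0] by auto

lemma some_coset: "(SOME z. z \<in> coset L x) - x \<in> L"
proof -
  have "(SOME z. z \<in> coset L x) \<in> coset L x" by (rule someI[of _ x]) (rule coset_self)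
  then show ?thesis using mem_coset by blast
qed

lemma coset_some: "coset L (SOME z. z \<in> coset L x) = coset L x"
  using some_coset coset_eq by blast

lemma ghat_coset: "ghat g xs (coset L x) = k x"
proof -
  define s where "s = (SOME z. z \<in> coset L x)"
  have "s - x \<in> L" using some_coset s_def by simp
  then have "k (x + (s - x)) = k x" by (rule kL)
  then have "k s = k x" by simp
  then show ?thesis unfolding ghat_def Let_def s_def[symmetric] k_def by simp
qed

lemma Q_carrier: "vcarrier Q = range (coset L)" by (simp add: Xquot_def)

lemma Q_add: "vadd Q (coset L x) (coset L y) = coset L (x + y)"
proof (rule set_eqI)
  fix z
  show "z \<in> vadd Q (coset L x) (coset L y) \<longleftrightarrow> z \<in> coset L (x + y)"
  proof
    assume "z \<in> vadd Q (coset L x) (coset L y)"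
    then have "\<exists>a b. z = a + b \<and> a \<in> coset L x \<and> b \<in> coset L y" by (simp add: Xquot_def)
    then obtain a b where ab: "z = a + b" "a \<in> coset L x" "b \<in> coset L y" by blast
    then have "a - x \<in> L" "b - y \<in> L" using mem_coset by auto
    then have "(a - x) + (b - y) \<in> L" by (rule L_add)
    moreover have "(a - x) + (b - y) = z - (x + y)" using ab by simp
    ultimately show "z \<in> coset L (x + y)" using mem_coset by simp
  next
    assume "z \<in> coset L (x + y)"
    then have "z - (x + y) \<in> L" using mem_coset by simp
    moreover have "(x + (z - (x + y))) - x = z - (x + y)" by simp
    ultimately have "x + (z - (x + y)) \<in> coset L x" using mem_coset by metis
    moreover have "y \<in> coset L y" by (rule coset_self)
    moreover have "z = (x + (z - (x + y))) + y" by simp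
    ultimately have "\<exists>a b. z = a + b \<and> a \<in> coset L x \<and> b \<in> coset L y" by blast
    then show "z \<in> vadd Q (coset L x) (coset L y)" by (simp add: Xquot_def)
  qed
qed

lemma Q_scale: "vscale Q c (coset L x) = coset L (c *\<^sub>R x)"
proof (rule set_eqI)
  fix z
  show "z \<in> vscale Q c (coset L x) \<longleftrightarrow> z \<in> coset L (c *\<^sub>R x)"
  proof
    assume "z \<in> vscale Q c (coset L x)"
    then have "\<exists>a l. z = c *\<^sub>R a + l \<and> a \<in> coset L x \<and> l \<in> L" by (simp add: Xquot_def)
    then obtain a l where al: "z = c *\<^sub>R a + l" "a \<in> coset L x" "l \<in> L" by blast
    then have "a - x \<in> L" using mem_coset by auto
    then have "c *\<^sub>R (a - x) + l \<in> L" using al(3) L_scale L_add by blast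
    moreover have "c *\<^sub>R (a - x) + l = z - c *\<^sub>R x" using al by (simp add: algebra_simps)
    ultimately show "z \<in> coset L (c *\<^sub>R x)" using mem_coset by simp
  next
    assume "z \<in> coset L (c *\<^sub>R x)"
    then have "z - c *\<^sub>R x \<in> L" using mem_coset by simp
    moreover have "z = c *\<^sub>R x + (z - c *\<^sub>R x)" by simp
    ultimately have "\<exists>a l. z = c *\<^sub>R a + l \<and> a \<in> coset L x \<and> l \<in> L" using coset_self[of x] by blast
    then show "z \<in> vscale Q c (coset L x)" by (simp add: Xquot_def)
  qed
qed

lemma Q_zero: "vzero Q = coset L 0" using coset0 by (simp add: Xquot_def)

lemma Q_neg: "vneg Q (coset L x) = coset L (- x)" unfolding vneg_def Q_scale by simp

lemma Q_istop: "istopology (\<lambda>U. U \<subseteq> range (coset L) \<and> openin T {x \<in> topspace T. coset L x \<in> U})"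
  unfolding istopology_def
proof (rule conjI; intro allI impI)
  fix S S' assume "S \<subseteq> range (coset L) \<and> openin T {x \<in> topspace T. coset L x \<in> S}"
    "S' \<subseteq> range (coset L) \<and> openin T {x \<in> topspace T. coset L x \<in> S'}"
  moreover have "{x \<in> topspace T. coset L x \<in> S \<inter> S'} =
     {x \<in> topspace T. coset L x \<in> S} \<inter> {x \<in> topspace T. coset L x \<in> S'}" by blast
  ultimately show "S \<inter> S' \<subseteq> range (coset L) \<and> openin T {x \<in> topspace T. coset L x \<in> S \<inter> S'}"
    using openin_Int[of T "{x \<in> topspace T. coset L x \<in> S}" "{x \<in> topspace T. coset L x \<in> S'}"] by auto
next
  fix K assume K: "\<forall>S\<in>K. S \<subseteq> range (coset L) \<and> openin T {x \<in> topspace T. coset L x \<in> S}"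
  have "{x \<in> topspace T. coset L x \<in> \<Union>K} = \<Union>((\<lambda>S. {x \<in> topspace T. coset L x \<in> S}) ` K)" by blast
  moreover have "openin T (\<Union>((\<lambda>S. {x \<in> topspace T. coset L x \<in> S}) ` K))"
    using K by (intro openin_Union) blast
  moreover have "\<Union>K \<subseteq> range (coset L)" using K by blast
  ultimately show "\<Union>K \<subseteq> range (coset L) \<and> openin T {x \<in> topspace T. coset L x \<in> \<Union>K}" by simp
qed

lemma openin_Q: "openin (quot_top T L) U \<longleftrightarrow> U \<subseteq> range (coset L) \<and> openin T {x. coset L x \<in> U}"
  unfolding quot_top_def using Q_istop top by simp

lemma topspace_Q: "topspace (quot_top T L) = range (coset L)"
proof -
  have "openin (quot_top T L) (range (coset L))" unfolding openin_Q using top openin_topspace[of T] by simp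
  then have "range (coset L) \<subseteq> topspace (quot_top T L)" by (rule openin_subset)
  moreover have "topspace (quot_top T L) \<subseteq> range (coset L)"
  proof
    fix A assume "A \<in> topspace (quot_top T L)"
    then obtain U where "openin (quot_top T L) U" "A \<in> U" unfolding topspace_def by blast
    then show "A \<in> range (coset L)" unfolding openin_Q by blast
  qed
  ultimately show ?thesis by blast
qed

lemma pi_cont: "continuous_map T (quot_top T L) (coset L)"
  unfolding continuous_map_def topspace_Q
proof (intro conjI allI impI)
  show "coset L \<in> topspace T \<rightarrow> range (coset L)" by simp
next
  fix U assume "openin (quot_top T L) U"
  then show "openin T {x \<in> topspace T. coset L x \<in> U}" unfolding openin_Q using top by simp
qed

lemma vtopQ: "vtop Q = quot_top T L" by (simp add: Xquot_def)

end


context P9 begin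

definition Psi :: "('a set \<Rightarrow> real) \<Rightarrow> 'a \<Rightarrow> real" where "Psi \<phi> = (\<lambda>x. \<phi> (coset L x))"
definition Psi' :: "('a \<Rightarrow> real) \<Rightarrow> 'a set \<Rightarrow> real" where
  "Psi' f = restrict (\<lambda>A. f (SOME x. x \<in> A)) (range (coset L))"
definition Lperp where "Lperp = {f \<in> vdual (Xs T). \<forall>l\<in>L. f l = 0}"

lemma vlinQ_iff: "vlinear_fun Q \<phi> \<longleftrightarrow>
   (\<forall>x y. \<phi> (coset L (x + y)) = \<phi> (coset L x) + \<phi> (coset L y)) \<and>
   (\<forall>c x. \<phi> (coset L (c *\<^sub>R x)) = c * \<phi> (coset L x))"
  unfolding vlinear_fun_def Q_carrier by (simp add: Q_add Q_scale)

lemma vdualQ_iff: "\<phi> \<in> vdual Q \<longleftrightarrow> \<phi> \<in> extensional (range (coset L)) \<and>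
   (\<forall>x y. \<phi> (coset L (x + y)) = \<phi> (coset L x) + \<phi> (coset L y)) \<and>
   (\<forall>c x. \<phi> (coset L (c *\<^sub>R x)) = c * \<phi> (coset L x)) \<and>
   continuous_map (quot_top T L) euclideanreal \<phi>"
  unfolding vdual_def vlinQ_iff by (simp add: Q_carrier vtopQ)

lemma phi0: "\<phi> \<in> vdual Q \<Longrightarrow> \<phi> (coset L 0) = 0"
  using vdualQ_iff[of \<phi>] by (metis mult_zero_left scale_zero_left)

lemma Psi_Lperp: "\<phi> \<in> vdual Q \<Longrightarrow> Psi \<phi> \<in> Lperp"
proof -
  assume \<phi>: "\<phi> \<in> vdual Q"
  note h = \<phi>[unfolded vdualQ_iff]
  have "linear (Psi \<phi>)" unfolding Psi_def by (rule linearI) (use h in auto)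
  moreover have "continuous_map T euclideanreal (Psi \<phi>)"
    unfolding Psi_def using continuous_map_compose[OF pi_cont, of euclideanreal \<phi>] h by (simp add: o_def)
  moreover have "Psi \<phi> l = 0" if "l \<in> L" for l
  proof -
    have "coset L l = coset L 0" using that coset_eq by simp
    then show ?thesis unfolding Psi_def using phi0[OF \<phi>] by simp
  qed
  ultimately show ?thesis unfolding Lperp_def vdual_Xs by blast
qed

lemma Lperp_lin: "f \<in> Lperp \<Longrightarrow> linear f" unfolding Lperp_def vdual_Xs by blast
lemma Lperp_cont: "f \<in> Lperp \<Longrightarrow> continuous_map T euclideanreal f" unfolding Lperp_def vdual_Xs by blast

lemma Lperp_coset: "f \<in> Lperp \<Longrightarrow> y \<in> coset L x \<Longrightarrow> f y = f x"
proof -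
  assume f: "f \<in> Lperp" and y: "y \<in> coset L x"
  then have "f (y - x) = 0" using mem_coset Lperp_def by blast
  then show ?thesis using linear_diff[OF Lperp_lin[OF f]] by simp
qed

lemma Psi'_coset: "f \<in> Lperp \<Longrightarrow> Psi' f (coset L x) = f x"
proof -
  assume f: "f \<in> Lperp"
  have "(SOME z. z \<in> coset L x) \<in> coset L x" by (rule someI[of _ x]) (rule coset_self)
  then have "f (SOME z. z \<in> coset L x) = f x" by (rule Lperp_coset[OF f])
  then show ?thesis unfolding Psi'_def by simp
qed

lemma Psi'_dual: "f \<in> Lperp \<Longrightarrow> Psi' f \<in> vdual Q"
proof -
  assume f: "f \<in> Lperp"
  have lin: "linear f" by (rule Lperp_lin[OF f])
  have "Psi' f \<in> extensional (range (coset L))" unfolding Psi'_def by (rule restrict_extensional)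
  moreover have "\<forall>x y. Psi' f (coset L (x + y)) = Psi' f (coset L x) + Psi' f (coset L y)"
    using Psi'_coset[OF f] linear_add[OF lin] by simp
  moreover have "\<forall>c x. Psi' f (coset L (c *\<^sub>R x)) = c * Psi' f (coset L x)"
    using Psi'_coset[OF f] linear_cmul[OF lin] by simp
  moreover have "continuous_map (quot_top T L) euclideanreal (Psi' f)"
    unfolding continuous_map_def
  proof (intro conjI allI impI)
    show "Psi' f \<in> topspace (quot_top T L) \<rightarrow> topspace euclideanreal" by simp
  next
    fix U :: "real set" assume "openin euclideanreal U"
    then have "openin T {x \<in> topspace T. f x \<in> U}" using Lperp_cont[OF f] unfolding continuous_map_def by blast
    then have "openin T {x. f x \<in> U}" using top by simp
    moreover have "{x. coset L x \<in> {A \<in> topspace (quot_top T L). Psi' f A \<in> U}} = {x. f x \<in> U}"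
      using Psi'_coset[OF f] topspace_Q by auto
    ultimately show "openin (quot_top T L) {A \<in> topspace (quot_top T L). Psi' f A \<in> U}"
      unfolding openin_Q using topspace_Q by simp
  qed
  ultimately show ?thesis unfolding vdualQ_iff by blast
qed

lemma Psi'Psi: "\<phi> \<in> vdual Q \<Longrightarrow> Psi' (Psi \<phi>) = \<phi>"
proof
  fix A assume \<phi>: "\<phi> \<in> vdual Q"
  show "Psi' (Psi \<phi>) A = \<phi> A"
  proof (cases "A \<in> range (coset L)")
    case True
    then obtain x where x: "A = coset L x" by blast
    show ?thesis unfolding Psi'_def Psi_def using True x coset_some by simp
  next
    case False
    have "\<phi> \<in> extensional (range (coset L))" using \<phi> vdualQ_iff by blast
    then show ?thesis unfolding Psi'_def using False by (simp add: extensional_def)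
  qed
qed

lemma PsiPsi': "f \<in> Lperp \<Longrightarrow> Psi (Psi' f) = f"
  unfolding Psi_def using Psi'_coset by auto

lemma BQ_iff: "\<phi> \<in> subdiff0 Q (ghat g xs) \<longleftrightarrow> \<phi> \<in> vdual Q \<and> (\<forall>x. ereal (\<phi> (coset L x)) \<le> k x)"
  unfolding subdiff0_def Q_carrier by (simp add: ghat_coset)

lemma dzeroQ: "dzero Q = restrict (\<lambda>_. 0) (range (coset L))" unfolding dzero_def Q_carrier ..

lemma dzeroQ_dual: "dzero Q \<in> vdual Q"
  unfolding vdualQ_iff dzeroQ
proof (intro conjI allI)
  show "continuous_map (quot_top T L) euclideanreal (restrict (\<lambda>_. 0::real) (range (coset L)))"
  proof (rule continuous_map_eq)
    show "continuous_map (quot_top T L) euclideanreal (\<lambda>_. 0::real)" by simp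
  qed (auto simp: topspace_Q)
qed (auto simp: restrict_extensional)

lemma dzeroQ_B: "dzero Q \<in> subdiff0 Q (ghat g xs)"
proof -
  have "\<forall>x. ereal 0 \<le> k x" using k_nonneg zero_ereal_def by metis
  then show ?thesis unfolding BQ_iff using dzeroQ_dual by (simp add: dzeroQ)
qed

lemma B_lin: "f \<in> subdiff0 (Xs T) g \<Longrightarrow> linear f" unfolding subdiff0_def vdual_Xs by blast
lemma B_cont: "f \<in> subdiff0 (Xs T) g \<Longrightarrow> continuous_map T euclideanreal f" unfolding subdiff0_def vdual_Xs by blast
lemma B_le: "f \<in> subdiff0 (Xs T) g \<Longrightarrow> ereal (f x) \<le> g x" unfolding subdiff0_def Xs_def by simp

lemma B_iff: "f \<in> subdiff0 (Xs T) g \<longleftrightarrow> linear f \<and> continuous_map T euclideanreal f \<and> (\<forall>x. ereal (f x) \<le> g x)"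
  unfolding subdiff0_def vdual_Xs by (simp add: Xs_def)

lemma Lperp_B: "f \<in> subdiff0 (Xs T) g \<Longrightarrow> (\<lambda>v. f v - xs v) \<in> Lperp"
proof -
  assume f: "f \<in> subdiff0 (Xs T) g"
  have "linear (\<lambda>v. f v - xs v)"
    by (rule linearI) (simp_all add: linear_add[OF B_lin[OF f]] linear_add[OF xs_lin]
        linear_cmul[OF B_lin[OF f]] linear_cmul[OF xs_lin] algebra_simps)
  moreover have "continuous_map T euclideanreal (\<lambda>v. f v - xs v)"
    by (intro continuous_map_diff B_cont[OF f] xs_cont)
  moreover have "\<forall>l\<in>L. f l - xs l = 0" using subdiff_L[OF f] by simp
  ultimately show ?thesis unfolding Lperp_def vdual_Xs by blast
qed

lemma Lperp_scale: "f \<in> Lperp \<Longrightarrow> (\<lambda>v. t * f v) \<in> Lperp"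
proof -
  assume f: "f \<in> Lperp"
  have "linear (\<lambda>v. t * f v)"
    by (rule linearI) (simp_all add: linear_add[OF Lperp_lin[OF f]] linear_cmul[OF Lperp_lin[OF f]] algebra_simps)
  moreover have "continuous_map T euclideanreal (\<lambda>v. t * f v)"
    using continuous_map_real_mult_left[OF Lperp_cont[OF f]] .
  moreover have "\<forall>l\<in>L. t * f l = 0" using f Lperp_def by simp
  ultimately show ?thesis unfolding Lperp_def vdual_Xs by blast
qed

end


context P9 begin

abbreviation ConeX where "ConeX \<equiv> cone_diff (Xs T) (subdiff0 (Xs T) g) xs"
abbreviation ConeQ where "ConeQ \<equiv> cone_diff Q (subdiff0 Q (ghat g xs)) (dzero Q)"

lemma ConeX_mem: "c \<in> ConeX \<longleftrightarrow> (\<exists>t f. c = (\<lambda>v. t * (f v - xs v)) \<and> 0 \<le> t \<and> f \<in> subdiff0 (Xs T) g)"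
proof -
  have "c \<in> ConeX \<longleftrightarrow> (\<exists>t f. c = restrict (\<lambda>v. t * (f v - xs v)) (vcarrier (Xs T)) \<and> 0 \<le> t \<and> f \<in> subdiff0 (Xs T) g)"
    unfolding cone_diff_def by blast
  also have "vcarrier (Xs T) = UNIV" by (simp add: Xs_def)
  finally show ?thesis by (simp add: restrict_UNIV)
qed

lemma ConeQ_mem: "c \<in> ConeQ \<longleftrightarrow> (\<exists>t \<phi>. c = restrict (\<lambda>A. t * \<phi> A) (range (coset L)) \<and> 0 \<le> t \<and> \<phi> \<in> subdiff0 Q (ghat g xs))"
proof -
  have "c \<in> ConeQ \<longleftrightarrow> (\<exists>t \<phi>. c = restrict (\<lambda>v. t * (\<phi> v - dzero Q v)) (vcarrier Q) \<and> 0 \<le> t \<and> \<phi> \<in> subdiff0 Q (ghat g xs))"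
    unfolding cone_diff_def by blast
  moreover have "restrict (\<lambda>v. t * (\<phi> v - dzero Q v)) (vcarrier Q) = restrict (\<lambda>A. t * \<phi> A) (range (coset L))" for t \<phi>
    unfolding Q_carrier dzeroQ by (rule restrict_ext) simp
  ultimately show ?thesis by simp
qed

lemma ConeX_Lperp: "ConeX \<subseteq> Lperp"
proof
  fix c assume "c \<in> ConeX"
  then obtain t f where c: "c = (\<lambda>v. t * (f v - xs v))" "f \<in> subdiff0 (Xs T) g" unfolding ConeX_mem by blast
  show "c \<in> Lperp" unfolding c(1) using Lperp_scale[OF Lperp_B[OF c(2)]] .
qed

lemma ereal_le_minus: "g x \<noteq> -\<infinity> \<Longrightarrow> ereal a \<le> g x - ereal b \<longleftrightarrow> ereal (a + b) \<le> g x"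
  by (cases "g x") auto

lemma Psi_cone: "Psi ` ConeQ \<subseteq> ConeX"
proof
  fix c assume "c \<in> Psi ` ConeQ"
  then obtain c0 where c0: "c0 \<in> ConeQ" "c = Psi c0" by blast
  from c0(1) obtain t \<phi> where "c0 = restrict (\<lambda>A. t * \<phi> A) (range (coset L))" "0 \<le> t" "\<phi> \<in> subdiff0 Q (ghat g xs)"
    unfolding ConeQ_mem by blast
  then have c: "c = Psi (restrict (\<lambda>A. t * \<phi> A) (range (coset L)))" "0 \<le> t" "\<phi> \<in> subdiff0 Q (ghat g xs)"
    using c0(2) by simp_all
  have \<phi>: "\<phi> \<in> vdual Q" "\<And>x. ereal (\<phi> (coset L x)) \<le> k x" using c(3) BQ_iff by auto
  define f where "f = (\<lambda>v. \<phi> (coset L v) + xs v)"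
  have PL: "Psi \<phi> \<in> Lperp" by (rule Psi_Lperp[OF \<phi>(1)])
  have "linear f"
    unfolding f_def using linear_add[OF Lperp_lin[OF PL]] linear_cmul[OF Lperp_lin[OF PL]] linear_add[OF xs_lin] linear_cmul[OF xs_lin]
    by (intro linearI) (simp_all add: Psi_def algebra_simps)
  moreover have "continuous_map T euclideanreal f"
    unfolding f_def using continuous_map_add[OF Lperp_cont[OF PL] xs_cont] by (simp add: Psi_def)
  moreover have "ereal (f x) \<le> g x" for x
    using \<phi>(2)[of x] ereal_le_minus[OF g_nm] unfolding f_def k_def by simp
  ultimately have fB: "f \<in> subdiff0 (Xs T) g" unfolding B_iff by blast
  have "c = (\<lambda>v. t * (f v - xs v))" unfolding c(1) f_def Psi_def by simp
  then show "c \<in> ConeX" unfolding ConeX_mem using c(2) fB by blast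
qed

lemma Psi'_cone: "Psi' ` ConeX \<subseteq> ConeQ"
proof
  fix c assume "c \<in> Psi' ` ConeX"
  then obtain c0 where c0: "c0 \<in> ConeX" "c = Psi' c0" by blast
  from c0(1) obtain t f where "c0 = (\<lambda>v. t * (f v - xs v))" "0 \<le> t" "f \<in> subdiff0 (Xs T) g"
    unfolding ConeX_mem by blast
  then have c: "c = Psi' (\<lambda>v. t * (f v - xs v))" "0 \<le> t" "f \<in> subdiff0 (Xs T) g"
    using c0(2) by simp_all
  define \<phi> where "\<phi> = Psi' (\<lambda>v. f v - xs v)"
  have fL: "(\<lambda>v. f v - xs v) \<in> Lperp" by (rule Lperp_B[OF c(3)])
  have "\<phi> \<in> vdual Q" unfolding \<phi>_def by (rule Psi'_dual[OF fL])
  moreover have "ereal (\<phi> (coset L x)) \<le> k x" for x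
  proof -
    have "\<phi> (coset L x) = f x - xs x" unfolding \<phi>_def using Psi'_coset[OF fL] by simp
    then show ?thesis unfolding k_def using B_le[OF c(3), of x] ereal_le_minus[OF g_nm] by simp
  qed
  ultimately have \<phi>B: "\<phi> \<in> subdiff0 Q (ghat g xs)" unfolding BQ_iff by blast
  have "c = restrict (\<lambda>A. t * \<phi> A) (range (coset L))"
    unfolding c(1) \<phi>_def Psi'_def by (rule restrict_ext) simp
  then show "c \<in> ConeQ" unfolding ConeQ_mem using c(2) \<phi>B by blast
qed

lemma tsWX: "topspace (wstar (Xs T)) = vdual (Xs T)"
  unfolding wstar_def Xs_def by (simp add: topspace_product_topology vdual_def)

lemma tsWQ: "topspace (wstar Q) = vdual Q"
proof -
  have "vdual Q \<subseteq> topspace (product_topology (\<lambda>_. euclideanreal) (vcarrier Q))"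
    unfolding topspace_product_topology vdual_def by (auto simp: PiE_def)
  then show ?thesis unfolding wstar_def by auto
qed

lemma Psi_cont: "continuous_map (wstar Q) (wstar (Xs T)) Psi"
proof -
  have "continuous_map (wstar Q) euclideanreal (\<lambda>\<phi>. Psi \<phi> x)" for x
  proof -
    have "coset L x \<in> vcarrier Q" unfolding Q_carrier by simp
    from continuous_map_from_subtopology[OF continuous_map_product_projection[OF this, of "\<lambda>_. euclideanreal"], of "vdual Q"]
    show ?thesis unfolding Psi_def wstar_def .
  qed
  then have "continuous_map (wstar Q) (product_topology (\<lambda>_. euclideanreal) UNIV) Psi"
    unfolding continuous_map_componentwise_UNIV by blast
  moreover have "Psi \<in> topspace (wstar Q) \<rightarrow> vdual (Xs T)"
    using Psi_Lperp tsWQ unfolding Lperp_def by auto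
  ultimately show ?thesis unfolding wstar_def[of "Xs T"] continuous_map_in_subtopology by (simp add: Xs_def)
qed

lemma Lperp_vdual: "Lperp \<subseteq> vdual (Xs T)" unfolding Lperp_def by blast

lemma Psi'_cont: "continuous_map (subtopology (wstar (Xs T)) Lperp) (wstar Q) Psi'"
proof -
  let ?S = "subtopology (wstar (Xs T)) Lperp"
  have comp: "continuous_map ?S euclideanreal (\<lambda>f. Psi' f A)" if A: "A \<in> range (coset L)" for A
  proof -
    have eq: "(\<lambda>f. Psi' f A) = (\<lambda>f. f (SOME x. x \<in> A))" unfolding Psi'_def using A by simp
    have "continuous_map (product_topology (\<lambda>_::'a. euclideanreal) UNIV) euclideanreal (\<lambda>f. f (SOME x. x \<in> A))"
      by (rule continuous_map_product_projection) simp
    then have "continuous_map (wstar (Xs T)) euclideanreal (\<lambda>f. f (SOME x. x \<in> A))"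
      unfolding wstar_def by (simp add: Xs_def continuous_map_from_subtopology)
    then show ?thesis unfolding eq by (rule continuous_map_from_subtopology)
  qed
  have "continuous_map ?S (product_topology (\<lambda>_. euclideanreal) (vcarrier Q)) Psi'"
    unfolding continuous_map_componentwise Q_carrier
  proof (intro conjI ballI)
    show "Psi' ` topspace ?S \<subseteq> extensional (range (coset L))"
      unfolding Psi'_def using restrict_extensional by blast
  qed (rule comp)
  moreover have "Psi' \<in> topspace ?S \<rightarrow> vdual Q"
    using Psi'_dual by auto
  ultimately show ?thesis unfolding wstar_def[of Q] continuous_map_in_subtopology by simp
qed

lemma Lperp_closed: "closedin (wstar (Xs T)) Lperp"
proof -
  let ?W = "wstar (Xs T)"
  have cl: "closedin ?W {f \<in> topspace ?W. f l \<in> {0}}" for l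
  proof (rule closedin_continuous_map_preimage)
    have "continuous_map (product_topology (\<lambda>_::'a. euclideanreal) UNIV) euclideanreal (\<lambda>f. f l)"
      by (rule continuous_map_product_projection) simp
    then show "continuous_map ?W euclideanreal (\<lambda>f. f l)"
      unfolding wstar_def by (simp add: Xs_def continuous_map_from_subtopology)
  qed simp
  have "Lperp = \<Inter>((\<lambda>l. {f \<in> topspace ?W. f l \<in> {0}}) ` L)"
    unfolding Lperp_def tsWX using L0 by auto
  also have "closedin ?W \<dots>" using L0 cl by (intro closedin_Inter) auto
  finally show ?thesis .
qed

lemma Lperp_subspace: "dual_subspace (Xs T) Lperp"
  unfolding dual_subspace_def
proof (intro conjI ballI allI)
  show "Lperp \<subseteq> vdual (Xs T)" by (rule Lperp_vdual)
next
  have "dzero (Xs T) = (\<lambda>_. 0)" unfolding dzero_def by (simp add: Xs_def restrict_UNIV)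
  moreover have "linear (\<lambda>_::'a. 0::real)" by (rule linearI) simp_all
  ultimately show "dzero (Xs T) \<in> Lperp" unfolding Lperp_def vdual_Xs by simp
next
  fix f h assume f: "f \<in> Lperp" and h: "h \<in> Lperp"
  have "linear (\<lambda>v. f v + h v)"
    by (rule linearI) (simp_all add: linear_add[OF Lperp_lin[OF f]] linear_add[OF Lperp_lin[OF h]]
        linear_cmul[OF Lperp_lin[OF f]] linear_cmul[OF Lperp_lin[OF h]] algebra_simps)
  moreover have "continuous_map T euclideanreal (\<lambda>v. f v + h v)"
    by (intro continuous_map_add Lperp_cont f h)
  moreover have "\<forall>l\<in>L. f l + h l = 0" using f h Lperp_def by simp
  ultimately show "restrict (\<lambda>v. f v + h v) (vcarrier (Xs T)) \<in> Lperp"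
    unfolding Lperp_def vdual_Xs by (simp add: Xs_def restrict_UNIV)
next
  fix c f assume f: "f \<in> Lperp"
  show "restrict (\<lambda>v. c * f v) (vcarrier (Xs T)) \<in> Lperp"
    using Lperp_scale[OF f, of c] by (simp add: Xs_def restrict_UNIV)
qed

end


context P9 begin

lemma part_proper: "vproper Q (ghat g xs)"
  unfolding vproper_def Q_carrier
proof (intro conjI ballI)
  fix A assume "A \<in> range (coset L)"
  then obtain x where "A = coset L x" by blast
  then show "ghat g xs A \<noteq> -\<infinity>" using ghat_coset k_nonneg[of x] by auto
next
  have "ghat g xs (coset L 0) \<noteq> \<infinity>" using ghat_coset[of 0] k0 by simp
  then show "\<exists>A\<in>range (coset L). ghat g xs A \<noteq> \<infinity>" by blast
qed

lemma part_lsc: "vlsc Q (ghat g xs)"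
  unfolding vlsc_def vtopQ topspace_Q
proof
  fix t :: ereal
  have "{x. coset L x \<in> {A \<in> range (coset L). t < ghat g xs A}} = {x. t < k x}"
    using ghat_coset by auto
  then show "openin (quot_top T L) {A \<in> range (coset L). t < ghat g xs A}"
    unfolding openin_Q using klsc by auto
qed

lemma part_sublinear: "vsublinear Q (ghat g xs)"
  unfolding vsublinear_def Q_carrier Q_zero
proof (intro conjI allI ballI impI)
  show "ghat g xs (coset L 0) = 0" using ghat_coset k0 by simp
next
  fix t :: real and A assume A: "A \<in> range (coset L)" and t: "0 < t"
  then obtain x where "A = coset L x" by blast
  then show "ghat g xs (vscale Q t A) = ereal t * ghat g xs A"
    using Q_scale ghat_coset khom[OF t] by simp
next
  fix A B assume "A \<in> range (coset L)" "B \<in> range (coset L)"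
  then obtain x y where "A = coset L x" "B = coset L y" by blast
  then show "ghat g xs (vadd Q A B) \<le> ghat g xs A + ghat g xs B"
    using Q_add ghat_coset ksub by simp
qed

lemma part_nonneg: "\<forall>A\<in>vcarrier Q. ghat g xs A \<ge> 0"
  unfolding Q_carrier using ghat_coset k_nonneg by auto

lemma part_Lsp: "Lsp Q (ghat g xs) = {vzero Q}"
proof -
  define u where "u = (SOME u. u \<in> subdiff0 Q (ghat g xs))"
  have uB: "u \<in> subdiff0 Q (ghat g xs)" unfolding u_def by (rule someI[of _ "dzero Q"]) (rule dzeroQ_B)
  then have uV: "u \<in> vdual Q" using BQ_iff by blast
  have u0: "u (coset L 0) = 0" by (rule phi0[OF uV])
  have "{v \<in> vcarrier Q. ghat g xs v = ereal (u v) \<and> ghat g xs (vneg Q v) = ereal (- u v)} = {coset L 0}"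
  proof (rule set_eqI, rule iffI)
    fix v assume "v \<in> {v \<in> vcarrier Q. ghat g xs v = ereal (u v) \<and> ghat g xs (vneg Q v) = ereal (- u v)}"
    then obtain x where v: "v = coset L x" and e: "k x = ereal (u v)" "k (- x) = ereal (- u v)"
      unfolding Q_carrier using ghat_coset Q_neg by auto
    have "0 \<le> u v" "0 \<le> - u v" using e k_nonneg[of x] k_nonneg[of "-x"] by auto
    then have "u v = 0" by simp
    then have "k x = 0" "k (- x) = 0" using e by auto
    then have "x \<in> L" using L_iff by blast
    then show "v \<in> {coset L 0}" using v coset_eq by simp
  next
    fix v assume "v \<in> {coset L 0}"
    then have v: "v = coset L 0" by simp
    have "vneg Q (coset L 0) = coset L 0" using Q_neg[of 0] by simp
    then show "v \<in> {v \<in> vcarrier Q. ghat g xs v = ereal (u v) \<and> ghat g xs (vneg Q v) = ereal (- u v)}"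
      using v u0 ghat_coset[of 0] k0 Q_carrier by simp
  qed
  then show ?thesis unfolding Lsp_def Let_def u_def[symmetric] Q_zero .
qed

lemma K_Lperp: "wstar (Xs T) closure_of ConeX \<subseteq> Lperp"
  by (rule closure_of_minimal[OF ConeX_Lperp Lperp_closed])

lemma key:
  assumes Ks: "dual_subspace (Xs T) (wstar (Xs T) closure_of ConeX)" and f: "f \<in> Lperp"
  shows "f \<in> wstar (Xs T) closure_of ConeX"
proof (rule ccontr)
  let ?K = "wstar (Xs T) closure_of ConeX"
  assume nf: "f \<notin> ?K"
  have fV: "f \<in> vdual (Xs T)" using f Lperp_vdual by blast
  obtain x where x: "\<forall>\<psi>\<in>?K. \<psi> x = 0" "f x \<noteq> 0"
    using wstar_sep[OF closedin_closure_of Ks fV nf] by blast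
  have CK: "ConeX \<subseteq> ?K"
  proof (rule closure_of_subset)
    show "ConeX \<subseteq> topspace (wstar (Xs T))" unfolding tsWX using ConeX_Lperp Lperp_vdual by (rule subset_trans)
  qed
  have hB: "h x = xs x" if h: "h \<in> subdiff0 (Xs T) g" for h
  proof -
    have "(\<lambda>v. 1 * (h v - xs v)) \<in> ConeX" unfolding ConeX_mem
      by (rule exI[where x="1::real"], rule exI[where x=h]) (simp add: h)
    then have "(\<lambda>v. 1 * (h v - xs v)) \<in> ?K" using CK by (rule subsetD[rotated])
    then have "(\<lambda>v. 1 * (h v - xs v)) x = 0" using x(1) by (rule bspec[rotated])
    then show ?thesis by simp
  qed
  have hB': "h (- x) = xs (- x)" if h: "h \<in> subdiff0 (Xs T) g" for h
    using hB[OF h] linear_neg[OF B_lin[OF h]] linear_neg[OF xs_lin] by simp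
  have "x \<notin> L" using f x(2) Lperp_def by auto
  then have "k x \<noteq> 0 \<or> k (- x) \<noteq> 0" using L_iff by blast
  then obtain y where y: "y = x \<or> y = - x" "k y \<noteq> 0" by blast
  then have ky: "0 < k y" using k_nonneg[of y] by (simp add: order_less_le)
  obtain F where F: "linear F" "continuous_map T euclideanreal F" "\<And>v. ereal (F v) \<le> k v" "F y > 0"
    using sublinear_sep[OF X k0 k_nonneg khom ksub klsc_real ky] by blast
  define h where "h = (\<lambda>v. F v + xs v)"
  have "linear h" unfolding h_def
    by (rule linearI) (simp_all add: linear_add[OF F(1)] linear_add[OF xs_lin]
        linear_cmul[OF F(1)] linear_cmul[OF xs_lin] algebra_simps)
  moreover have "continuous_map T euclideanreal h" unfolding h_def by (intro continuous_map_add F(2) xs_cont)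
  moreover have "ereal (h v) \<le> g v" for v
    using F(3)[of v] ereal_le_minus[OF g_nm] unfolding h_def k_def by simp
  ultimately have hBB: "h \<in> subdiff0 (Xs T) g" unfolding B_iff by blast
  have "h y = xs y"
  proof (cases "y = x")
    case True then show ?thesis using hB[OF hBB] by simp
  next
    case False then have "y = - x" using y(1) by simp
    then show ?thesis using hB'[OF hBB] by simp
  qed
  then show False using F(4) h_def by simp
qed

lemma part_equiv:
  "xs \<in> qri (Xs T) (subdiff0 (Xs T) g) \<longleftrightarrow> dzero Q \<in> qi Q (subdiff0 Q (ghat g xs))"
proof -
  let ?K = "wstar (Xs T) closure_of ConeX"
  let ?KQ = "wstar Q closure_of ConeQ"
  have qri_iff: "xs \<in> qri (Xs T) (subdiff0 (Xs T) g) \<longleftrightarrow> dual_subspace (Xs T) ?K"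
    unfolding qri_def using xsB by simp
  have qi_iff: "dzero Q \<in> qi Q (subdiff0 Q (ghat g xs)) \<longleftrightarrow> ?KQ = vdual Q"
    unfolding qi_def using dzeroQ_B by simp
  show ?thesis unfolding qri_iff qi_iff
  proof
    assume Ks: "dual_subspace (Xs T) ?K"
    show "?KQ = vdual Q"
    proof
      show "?KQ \<subseteq> vdual Q" using closure_of_subset_topspace[of "wstar Q" ConeQ] tsWQ by simp
    next
      show "vdual Q \<subseteq> ?KQ"
      proof
        fix \<phi> assume \<phi>: "\<phi> \<in> vdual Q"
        have fL: "Psi \<phi> \<in> Lperp" by (rule Psi_Lperp[OF \<phi>])
        have fK: "Psi \<phi> \<in> ?K" by (rule key[OF Ks fL])
        have "subtopology (wstar (Xs T)) Lperp closure_of ConeX = Lperp \<inter> ?K"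
          unfolding closure_of_subtopology using ConeX_Lperp by (simp add: Int_absorb1)
        then have "Psi \<phi> \<in> subtopology (wstar (Xs T)) Lperp closure_of ConeX" using fL fK by simp
        then have "Psi' (Psi \<phi>) \<in> Psi' ` (subtopology (wstar (Xs T)) Lperp closure_of ConeX)" by (rule imageI)
        then have "Psi' (Psi \<phi>) \<in> wstar Q closure_of (Psi' ` ConeX)"
          by (rule subsetD[OF continuous_map_image_closure_subset[OF Psi'_cont]])
        also have "\<dots> \<subseteq> ?KQ" by (rule closure_of_mono[OF Psi'_cone])
        finally show "\<phi> \<in> ?KQ" using Psi'Psi[OF \<phi>] by simp
      qed
    qed
  next
    assume KQ: "?KQ = vdual Q"
    have "?K = Lperp"
    proof
      show "?K \<subseteq> Lperp" by (rule K_Lperp)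
    next
      show "Lperp \<subseteq> ?K"
      proof
        fix f assume f: "f \<in> Lperp"
        have "Psi' f \<in> ?KQ" using KQ Psi'_dual[OF f] by simp
        then have "Psi (Psi' f) \<in> Psi ` ?KQ" by (rule imageI)
        then have "Psi (Psi' f) \<in> wstar (Xs T) closure_of (Psi ` ConeQ)"
          by (rule subsetD[OF continuous_map_image_closure_subset[OF Psi_cont]])
        also have "\<dots> \<subseteq> ?K" by (rule closure_of_mono[OF Psi_cone])
        finally show "f \<in> ?K" using PsiPsi'[OF f] by simp
      qed
    qed
    then show "dual_subspace (Xs T) ?K" using Lperp_subspace by simp
  qed
qed

end

theorem proposition9:
  fixes T :: "'a::real_vector topology"
    and g :: "'a \<Rightarrow> ereal"
    and xs :: "'a \<Rightarrow> real"
  assumes X: "is_hlcs (Xs T)"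
    and nontriv: "\<exists>x::'a. x \<noteq> 0"
    and gGamma: "Gamma (Xs T) g"
    and gsub: "vsublinear (Xs T) g"
    and xs: "xs \<in> subdiff0 (Xs T) g"
  defines "L \<equiv> {x. g x = ereal (xs x) \<and> g (- x) = ereal (- xs x)}"
  shows "vproper (Xquot T L) (ghat g xs) \<and>
         vlsc (Xquot T L) (ghat g xs) \<and>
         vsublinear (Xquot T L) (ghat g xs) \<and>
         (\<forall>A\<in>vcarrier (Xquot T L). ghat g xs A \<ge> 0) \<and>
         Lsp (Xquot T L) (ghat g xs) = {vzero (Xquot T L)} \<and>
         (xs \<in> qri (Xs T) (subdiff0 (Xs T) g) \<longleftrightarrow>
            dzero (Xquot T L) \<in> qi (Xquot T L) (subdiff0 (Xquot T L) (ghat g xs)))"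
  proof -
  interpret P: P9 T g xs L
    by unfold_locales (simp_all add: X gGamma gsub xs L_def)
  show ?thesis
    using P.part_proper P.part_lsc P.part_sublinear P.part_nonneg P.part_Lsp P.part_equiv by blast
qed

end
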